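(* Let $(\mathcal{T},[1],\Delta)$ be a triangulated category and $\mathcal{N}$ a triangulated subcategory of $\mathcal{T}$. Let $\mathcal{U},\mathcal{V}$ be additive subcategories of $\mathcal{T}$ such that $(\mathcal{U},\mathcal{U}^{\perp})$ and $({}^{\perp}\mathcal{V},\mathcal{V})$ are torsion pairs in $\mathcal{T}$. Assume that $\mathcal{X}=\mathcal{U}\cap\mathcal{V}\cap\mathcal{N}$ is closed under direct summands, $\mathcal{U}^{\perp}[-1]\subseteq\mathcal{V}\cap\mathcal{N}$ and ${}^{\perp}\mathcal{V}[1]\subseteq\mathcal{U}\cap\mathcal{N}$. Then: (i) $(\mathcal{U},\mathcal{X},\mathcal{V})$ is an $\mathcal{N}$-localization triple; (ii) if ${}^{\perp}\mathcal{V}[1]=\mathcal{U}\cap\mathcal{N}$, then $(\mathcal{U},\mathcal{X},\mathcal{V})$ satisfies the Verdier condition; (iii) if $\mathcal{U}^{\perp}[-1]=\mathcal{V}\cap\mathcal{N}$, then $(\mathcal{U},\mathcal{X},\mathcal{V})$ satisfies the Verdier condition.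
   Context: $\Delta$ denotes the class of distinguished triangles of $\mathcal{T}$; all subcategories are full, additive and closed under isomorphisms. $\mathcal{U}^{\perp}=\{T\in\mathcal{T}:\mathrm{Hom}_{\mathcal{T}}(\mathcal{U},T)=0\}$, ${}^{\perp}\mathcal{V}=\{T:\mathrm{Hom}_{\mathcal{T}}(T,\mathcal{V})=0\}$. A pair $(\mathcal{C},\mathcal{D})$ of additive subcategories is a torsion pair if $\mathrm{Hom}_{\mathcal{T}}(\mathcal{C},\mathcal{D})=0$ and every $T\in\mathcal{T}$ admits a triangle $C\to T\to D\to C[1]$ in $\Delta$ with $C\in\mathcal{C}$, $D\in\mathcal{D}$. For additive subcategories $\mathcal{X}\subseteq\mathcal{C}$, the factor category $\mathcal{C}/[\mathcal{X}]$ has the objects of $\mathcal{C}$ and morphisms $\mathrm{Hom}_{\mathcal{T}}(A,B)$ modulo those factoring through an object of $\mathcal{X}$; $\underline{f}$ is the class of $f$. For a subcategory $\mathcal{Y}$, a morphism $f\colon A\to B$ is $\mathcal{Y}$-monic if $\mathrm{Hom}_{\mathcal{T}}(B,Y)\to\mathrm{Hom}_{\mathcal{T}}(A,Y)$ is surjective for all $Y\in\mathcal{Y}$, $\mathcal{Y}$-epic dually; a $\mathcal{Y}$-preenvelope of $A$ is a $\mathcal{Y}$-monic $A\to Y$ with $Y\in\mathcal{Y}$, a $\mathcal{Y}$-precover is a $\mathcal{Y}$-epic $Y\to A$ with $Y\in\mathcal{Y}$. For additive subcategories $\mathcal{U},\mathcal{V}\supseteq\mathcal{X}$ of an additive subcategory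 $\mathcal{A}$, put $\mathcal{U}^{\perp_{\mathcal{A}/[\mathcal{X}]}}=\{W\in\mathcal{A}:\mathrm{Hom}_{\mathcal{A}/[\mathcal{X}]}(\mathcal{U},W)=0\}$ and ${}^{\perp_{\mathcal{A}/[\mathcal{X}]}}\mathcal{V}=\{W\in\mathcal{A}:\mathrm{Hom}_{\mathcal{A}/[\mathcal{X}]}(W,\mathcal{V})=0\}$. A triple $(\mathcal{U},\mathcal{X},\mathcal{V})$ with $\mathcal{X}\subseteq\mathcal{U}\cap\mathcal{V}$ and $\mathcal{U},\mathcal{V}\subseteq\mathcal{A}$ is a localization triple of $\mathcal{A}$ if: (a) each $A\in\mathcal{A}$ admits a triangle $A[-1]\to W_A\to Q(A)\xrightarrow{r_A}A$ in $\Delta$ with $r_A$ a $\mathcal{U}$-precover and $W_A\in\mathcal{U}^{\perp_{\mathcal{A}/[\mathcal{X}]}}$; (b) each $A\in\mathcal{A}$ admits a triangle $A\xrightarrow{j^A}R(A)\to W^A\to A[1]$ in $\Delta$ with $j^A$ a $\mathcal{V}$-preenvelope and $W^A\in{}^{\perp_{\mathcal{A}/[\mathcal{X}]}}\mathcal{V}$; (c) if $A\in\mathcal{V}$ then $Q(A)\in\mathcal{U}\cap\mathcal{V}$ and $W_A\in(\mathcal{U}\cap\mathcal{V})^{\perp_{\mathcal{V}/[\mathcal{X}]}}$, and if $A\in\mathcal{U}$ then $R(A)\in\mathcal{U}\cap\mathcal{V}$ and $W^A\in{}^{\perp_{\mathcal{U}/[\mathcal{X}]}}(\mathcal{U}\cap\mathcal{V})$.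 A localization triple $(\mathcal{U},\mathcal{X},\mathcal{V})$ of $\mathcal{T}$ is an $\mathcal{N}$-localization triple if $\mathcal{X}=\mathcal{U}\cap\mathcal{V}\cap\mathcal{N}$ and $\mathcal{U}^{\perp_{\mathcal{T}/[\mathcal{X}]}}\subseteq\mathcal{N}$, ${}^{\perp_{\mathcal{T}/[\mathcal{X}]}}\mathcal{V}\subseteq\mathcal{N}$. It satisfies the Verdier condition if for every triangle $A\xrightarrow{s}B\to N\to A[1]$ in $\Delta$ with $A,B\in\mathcal{U}\cap\mathcal{V}$ and $N\in\mathcal{N}$, $\underline{s}$ is an isomorphism in $(\mathcal{U}\cap\mathcal{V})/[\mathcal{X}]$. *)

theory Defs
  imports Main
begin

text \<open>Morphisms live in a type 'm, objects in a type 'o;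
Hom A B is the set of morphisms from A to B, cmp g f is the composite
g after f, and add/neg/zer give the abelian group structure on each Hom set.\<close>

record ('o, 'm) tcat =
  Ob  :: "'o set"
  Hom :: "'o \<Rightarrow> 'o \<Rightarrow> 'm set"
  cmp :: "'m \<Rightarrow> 'm \<Rightarrow> 'm"
  idm :: "'o \<Rightarrow> 'm"
  add :: "'m \<Rightarrow> 'm \<Rightarrow> 'm"
  neg :: "'m \<Rightarrow> 'm"
  zer :: "'o \<Rightarrow> 'o \<Rightarrow> 'm"
  shO :: "'o \<Rightarrow> 'o"
  shM :: "'m \<Rightarrow> 'm"
  tri :: "('o \<times> 'o \<times> 'o \<times> 'm \<times> 'm \<times> 'm) set"

definition is_iso :: "('o,'m) tcat \<Rightarrow> 'o \<Rightarrow> 'o \<Rightarrow> 'm \<Rightarrow> bool" where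
  "is_iso T A B f \<longleftrightarrow> f \<in> Hom T A B \<and>
     (\<exists>g \<in> Hom T B A. cmp T g f = idm T A \<and> cmp T f g = idm T B)"

definition is_zero_obj :: "('o,'m) tcat \<Rightarrow> 'o \<Rightarrow> bool" where
  "is_zero_obj T Z \<longleftrightarrow> Z \<in> Ob T \<and>
     (\<forall>A \<in> Ob T. Hom T Z A = {zer T Z A} \<and> Hom T A Z = {zer T A Z})"

definition is_biprod :: "('o,'m) tcat \<Rightarrow> 'o \<Rightarrow> 'o \<Rightarrow> 'o \<Rightarrow> 'm \<Rightarrow> 'm \<Rightarrow> 'm \<Rightarrow> 'm \<Rightarrow> bool" where
  "is_biprod T A B P i1 i2 p1 p2 \<longleftrightarrow> A \<in> Ob T \<and> B \<in> Ob T \<and> P \<in> Ob T \<and>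
     i1 \<in> Hom T A P \<and> i2 \<in> Hom T B P \<and> p1 \<in> Hom T P A \<and> p2 \<in> Hom T P B \<and>
     cmp T p1 i1 = idm T A \<and> cmp T p2 i2 = idm T B \<and>
     cmp T p1 i2 = zer T B A \<and> cmp T p2 i1 = zer T A B \<and>
     add T (cmp T i1 p1) (cmp T i2 p2) = idm T P"

definition additive_cat :: "('o,'m) tcat \<Rightarrow> bool" where
  "additive_cat T \<longleftrightarrow>
     (\<forall>A\<in>Ob T. \<forall>B\<in>Ob T. \<forall>C\<in>Ob T. \<forall>D\<in>Ob T.
        Hom T A B \<inter> Hom T C D \<noteq> {} \<longrightarrow> A = C \<and> B = D) \<and>
     (\<forall>A\<in>Ob T. idm T A \<in> Hom T A A) \<and>
     (\<forall>A\<in>Ob T. \<forall>B\<in>Ob T. \<forall>C\<in>Ob T. \<forall>f\<in>Hom T A B. \<forall>g\<in>Hom T B C.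
        cmp T g f \<in> Hom T A C) \<and>
     (\<forall>A\<in>Ob T. \<forall>B\<in>Ob T. \<forall>f\<in>Hom T A B.
        cmp T (idm T B) f = f \<and> cmp T f (idm T A) = f) \<and>
     (\<forall>A\<in>Ob T. \<forall>B\<in>Ob T. \<forall>C\<in>Ob T. \<forall>D\<in>Ob T.
        \<forall>f\<in>Hom T A B. \<forall>g\<in>Hom T B C. \<forall>h\<in>Hom T C D.
        cmp T h (cmp T g f) = cmp T (cmp T h g) f) \<and>
     \<comment> \<open>each Hom set is an abelian group\<close>
     (\<forall>A\<in>Ob T. \<forall>B\<in>Ob T.
        zer T A B \<in> Hom T A B \<and>
        (\<forall>f\<in>Hom T A B. \<forall>g\<in>Hom T A B. add T f g \<in> Hom T A B) \<and>
        (\<forall>f\<in>Hom T A B. neg T f \<in> Hom T A B) \<and>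
        (\<forall>f\<in>Hom T A B. \<forall>g\<in>Hom T A B. \<forall>h\<in>Hom T A B.
            add T (add T f g) h = add T f (add T g h)) \<and>
        (\<forall>f\<in>Hom T A B. \<forall>g\<in>Hom T A B. add T f g = add T g f) \<and>
        (\<forall>f\<in>Hom T A B. add T f (zer T A B) = f) \<and>
        (\<forall>f\<in>Hom T A B. add T f (neg T f) = zer T A B)) \<and>
     \<comment> \<open>composition is bilinear\<close>
     (\<forall>A\<in>Ob T. \<forall>B\<in>Ob T. \<forall>C\<in>Ob T.
        \<forall>f\<in>Hom T A B. \<forall>f'\<in>Hom T A B. \<forall>g\<in>Hom T B C. \<forall>g'\<in>Hom T B C.
        cmp T g (add T f f') = add T (cmp T g f) (cmp T g f') \<and>
        cmp T (add T g g') f = add T (cmp T g f) (cmp T g' f)) \<and>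
     \<comment> \<open>zero object and binary biproducts\<close>
     (\<exists>Z. is_zero_obj T Z) \<and>
     (\<forall>A\<in>Ob T. \<forall>B\<in>Ob T. \<exists>P i1 i2 p1 p2. is_biprod T A B P i1 i2 p1 p2)"

definition shift_autoequiv :: "('o,'m) tcat \<Rightarrow> bool" where
  "shift_autoequiv T \<longleftrightarrow>
     (\<forall>A\<in>Ob T. shO T A \<in> Ob T) \<and>
     (\<forall>A\<in>Ob T. \<forall>B\<in>Ob T. bij_betw (shM T) (Hom T A B) (Hom T (shO T A) (shO T B))) \<and>
     (\<forall>A\<in>Ob T. shM T (idm T A) = idm T (shO T A)) \<and>
     (\<forall>A\<in>Ob T. \<forall>B\<in>Ob T. \<forall>C\<in>Ob T. \<forall>f\<in>Hom T A B. \<forall>g\<in>Hom T B C.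
        shM T (cmp T g f) = cmp T (shM T g) (shM T f)) \<and>
     (\<forall>A\<in>Ob T. \<forall>B\<in>Ob T. \<forall>f\<in>Hom T A B. \<forall>g\<in>Hom T A B.
        shM T (add T f g) = add T (shM T f) (shM T g)) \<and>
     (\<forall>B\<in>Ob T. \<exists>A\<in>Ob T. \<exists>f. is_iso T (shO T A) B f)"

definition typed_triangle :: "('o,'m) tcat \<Rightarrow> 'o \<Rightarrow> 'o \<Rightarrow> 'o \<Rightarrow> 'm \<Rightarrow> 'm \<Rightarrow> 'm \<Rightarrow> bool" where
  "typed_triangle T A B C f g h \<longleftrightarrow> A \<in> Ob T \<and> B \<in> Ob T \<and> C \<in> Ob T \<and>
     f \<in> Hom T A B \<and> g \<in> Hom T B C \<and> h \<in> Hom T C (shO T A)"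

definition triangulated :: "('o,'m) tcat \<Rightarrow> bool" where
  "triangulated T \<longleftrightarrow> additive_cat T \<and> shift_autoequiv T \<and>
     \<comment> \<open>distinguished triangles are triangles\<close>
     (\<forall>(A,B,C,f,g,h)\<in>tri T. typed_triangle T A B C f g h) \<and>
     \<comment> \<open>TR1: closure under isomorphism of triangles\<close>
     (\<forall>A B C f g h A' B' C' f' g' h' a b c.
        (A,B,C,f,g,h) \<in> tri T \<and> typed_triangle T A' B' C' f' g' h' \<and>
        is_iso T A A' a \<and> is_iso T B B' b \<and> is_iso T C C' c \<and>
        cmp T b f = cmp T f' a \<and> cmp T c g = cmp T g' b \<and>
        cmp T (shM T a) h = cmp T h' c
        \<longrightarrow> (A',B',C',f',g',h') \<in> tri T) \<and>
     \<comment> \<open>TR1: A --id--> A --> 0 --> A[1] is distinguished\<close>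
     (\<forall>A\<in>Ob T. \<forall>Z. is_zero_obj T Z \<longrightarrow>
        (A, A, Z, idm T A, zer T A Z, zer T Z (shO T A)) \<in> tri T) \<and>
     \<comment> \<open>TR1: every morphism extends to a distinguished triangle\<close>
     (\<forall>A\<in>Ob T. \<forall>B\<in>Ob T. \<forall>f\<in>Hom T A B. \<exists>C g h. (A,B,C,f,g,h) \<in> tri T) \<and>
     \<comment> \<open>TR2: rotation\<close>
     (\<forall>A B C f g h. typed_triangle T A B C f g h \<longrightarrow>
        ((A,B,C,f,g,h) \<in> tri T \<longleftrightarrow> (B, C, shO T A, g, h, neg T (shM T f)) \<in> tri T)) \<and>
     \<comment> \<open>TR3: completion of morphisms of triangles\<close>
     (\<forall>A B C f g h A' B' C' f' g' h' a b.
        (A,B,C,f,g,h) \<in> tri T \<and> (A',B',C',f',g',h') \<in> tri T \<and>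
        a \<in> Hom T A A' \<and> b \<in> Hom T B B' \<and> cmp T b f = cmp T f' a
        \<longrightarrow> (\<exists>c\<in>Hom T C C'. cmp T c g = cmp T g' b \<and> cmp T (shM T a) h = cmp T h' c)) \<and>
     \<comment> \<open>TR4: octahedral axiom\<close>
     (\<forall>A B C f g C' u u' A' v v' B' w w'.
        (A,B,C',f,u,u') \<in> tri T \<and> (B,C,A',g,v,v') \<in> tri T \<and>
        (A,C,B',cmp T g f,w,w') \<in> tri T
        \<longrightarrow> (\<exists>a b. (C',B',A',a,b, cmp T (shM T u) v') \<in> tri T \<and>
               cmp T a u = cmp T w g \<and> cmp T w' a = u' \<and>
               cmp T b w = v \<and> cmp T v' b = cmp T (shM T f) w'))"

text \<open>Full additive subcategories closed under isomorphisms, given by object sets.\<close>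
definition iso_closed :: "('o,'m) tcat \<Rightarrow> 'o set \<Rightarrow> bool" where
  "iso_closed T S \<longleftrightarrow> (\<forall>A\<in>S. \<forall>B f. is_iso T A B f \<longrightarrow> B \<in> S)"

definition additive_subcat :: "('o,'m) tcat \<Rightarrow> 'o set \<Rightarrow> bool" where
  "additive_subcat T S \<longleftrightarrow> S \<subseteq> Ob T \<and> iso_closed T S \<and>
     (\<exists>Z\<in>S. is_zero_obj T Z) \<and>
     (\<forall>A\<in>S. \<forall>B\<in>S. \<forall>P i1 i2 p1 p2. is_biprod T A B P i1 i2 p1 p2 \<longrightarrow> P \<in> S)"

definition triangulated_subcat :: "('o,'m) tcat \<Rightarrow> 'o set \<Rightarrow> bool" where
  "triangulated_subcat T S \<longleftrightarrow> additive_subcat T S \<and>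
     (\<forall>A\<in>Ob T. A \<in> S \<longleftrightarrow> shO T A \<in> S) \<and>
     (\<forall>A B C f g h. (A,B,C,f,g,h) \<in> tri T \<and> A \<in> S \<and> B \<in> S \<longrightarrow> C \<in> S)"

definition closed_summands :: "('o,'m) tcat \<Rightarrow> 'o set \<Rightarrow> bool" where
  "closed_summands T S \<longleftrightarrow>
     (\<forall>A B P i1 i2 p1 p2. is_biprod T A B P i1 i2 p1 p2 \<and> P \<in> S \<longrightarrow> A \<in> S)"

definition rperp :: "('o,'m) tcat \<Rightarrow> 'o set \<Rightarrow> 'o set" where
  "rperp T U = {W \<in> Ob T. \<forall>A\<in>U. Hom T A W = {zer T A W}}"

definition lperp :: "('o,'m) tcat \<Rightarrow> 'o set \<Rightarrow> 'o set" where
  "lperp T V = {W \<in> Ob T. \<forall>B\<in>V. Hom T W B = {zer T W B}}"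

definition torsion_pair :: "('o,'m) tcat \<Rightarrow> 'o set \<Rightarrow> 'o set \<Rightarrow> bool" where
  "torsion_pair T C D \<longleftrightarrow> additive_subcat T C \<and> additive_subcat T D \<and>
     (\<forall>X\<in>C. \<forall>Y\<in>D. Hom T X Y = {zer T X Y}) \<and>
     (\<forall>X\<in>Ob T. \<exists>P Q c d e. P \<in> C \<and> Q \<in> D \<and> (P, X, Q, c, d, e) \<in> tri T)"

text \<open>S[1] and S[-1] as (isomorphism-closed) object classes.\<close>
definition shift_up :: "('o,'m) tcat \<Rightarrow> 'o set \<Rightarrow> 'o set" where
  "shift_up T S = {Y \<in> Ob T. \<exists>X\<in>S. \<exists>f. is_iso T (shO T X) Y f}"

definition shift_down :: "('o,'m) tcat \<Rightarrow> 'o set \<Rightarrow> 'o set" where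
  "shift_down T S = {Y \<in> Ob T. \<exists>X\<in>S. \<exists>f. is_iso T (shO T Y) X f}"

text \<open>Factor categories: f : A -> B is zero in C/[K] iff it factors through K.\<close>
definition factors_through :: "('o,'m) tcat \<Rightarrow> 'o set \<Rightarrow> 'o \<Rightarrow> 'o \<Rightarrow> 'm \<Rightarrow> bool" where
  "factors_through T K A B f \<longleftrightarrow>
     (\<exists>X\<in>K. \<exists>a\<in>Hom T A X. \<exists>b\<in>Hom T X B. f = cmp T b a)"

definition rperpQ :: "('o,'m) tcat \<Rightarrow> 'o set \<Rightarrow> 'o set \<Rightarrow> 'o set \<Rightarrow> 'o set" where
  "rperpQ T K U Amb = {W \<in> Amb. \<forall>Y\<in>U. \<forall>f\<in>Hom T Y W. factors_through T K Y W f}"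

definition lperpQ :: "('o,'m) tcat \<Rightarrow> 'o set \<Rightarrow> 'o set \<Rightarrow> 'o set \<Rightarrow> 'o set" where
  "lperpQ T K V Amb = {W \<in> Amb. \<forall>Y\<in>V. \<forall>f\<in>Hom T W Y. factors_through T K W Y f}"

definition is_precover :: "('o,'m) tcat \<Rightarrow> 'o set \<Rightarrow> 'o \<Rightarrow> 'o \<Rightarrow> 'm \<Rightarrow> bool" where
  "is_precover T Y Q A r \<longleftrightarrow> Q \<in> Y \<and> r \<in> Hom T Q A \<and>
     (\<forall>Z\<in>Y. \<forall>g\<in>Hom T Z A. \<exists>h\<in>Hom T Z Q. g = cmp T r h)"

definition is_preenvelope :: "('o,'m) tcat \<Rightarrow> 'o set \<Rightarrow> 'o \<Rightarrow> 'o \<Rightarrow> 'm \<Rightarrow> bool" where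
  "is_preenvelope T Y A R j \<longleftrightarrow> R \<in> Y \<and> j \<in> Hom T A R \<and>
     (\<forall>Z\<in>Y. \<forall>g\<in>Hom T A Z. \<exists>h\<in>Hom T R Z. g = cmp T h j)"

text \<open>Localization triple of the subcategory Amb. The triangle
  A[-1] -> W_A -> Q(A) -> A of (a) is written in its rotated form
  W_A -> Q(A) -> A -> W_A[1] (equivalent by TR2).\<close>
definition localization_triple ::
  "('o,'m) tcat \<Rightarrow> 'o set \<Rightarrow> 'o set \<Rightarrow> 'o set \<Rightarrow> 'o set \<Rightarrow> bool" where
  "localization_triple T Amb U X V \<longleftrightarrow>
     X \<subseteq> U \<inter> V \<and> U \<subseteq> Amb \<and> V \<subseteq> Amb \<and>
     (\<exists>Q W r s t R W' j p q.
       (\<forall>A\<in>Amb.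
          \<comment> \<open>(a)\<close>
          (W A, Q A, A, s A, r A, t A) \<in> tri T \<and>
          is_precover T U (Q A) A (r A) \<and> W A \<in> rperpQ T X U Amb \<and>
          \<comment> \<open>(b)\<close>
          (A, R A, W' A, j A, p A, q A) \<in> tri T \<and>
          is_preenvelope T V A (R A) (j A) \<and> W' A \<in> lperpQ T X V Amb \<and>
          \<comment> \<open>(c)\<close>
          (A \<in> V \<longrightarrow> Q A \<in> U \<inter> V \<and> W A \<in> rperpQ T X (U \<inter> V) V) \<and>
          (A \<in> U \<longrightarrow> R A \<in> U \<inter> V \<and> W' A \<in> lperpQ T X (U \<inter> V) U)))"

definition N_localization_triple ::
  "('o,'m) tcat \<Rightarrow> 'o set \<Rightarrow> 'o set \<Rightarrow> 'o set \<Rightarrow> 'o set \<Rightarrow> bool" where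
  "N_localization_triple T N U X V \<longleftrightarrow>
     localization_triple T (Ob T) U X V \<and> X = U \<inter> V \<inter> N \<and>
     rperpQ T X U (Ob T) \<subseteq> N \<and> lperpQ T X V (Ob T) \<subseteq> N"

definition factor_iso :: "('o,'m) tcat \<Rightarrow> 'o set \<Rightarrow> 'o \<Rightarrow> 'o \<Rightarrow> 'm \<Rightarrow> bool" where
  "factor_iso T K A B s \<longleftrightarrow> s \<in> Hom T A B \<and>
     (\<exists>u\<in>Hom T B A.
        factors_through T K A A (add T (cmp T u s) (neg T (idm T A))) \<and>
        factors_through T K B B (add T (cmp T s u) (neg T (idm T B))))"

definition verdier_condition ::
  "('o,'m) tcat \<Rightarrow> 'o set \<Rightarrow> 'o set \<Rightarrow> 'o set \<Rightarrow> 'o set \<Rightarrow> bool" where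
  "verdier_condition T N U X V \<longleftrightarrow>
     (\<forall>A B M s g h. (A,B,M,s,g,h) \<in> tri T \<and> A \<in> U \<inter> V \<and> B \<in> U \<inter> V \<and> M \<in> N
        \<longrightarrow> factor_iso T X A B s)"

end

theory Submission
  imports Defs
begin


locale TC =
  fixes T :: "('o,'m) tcat"
  assumes tri: "triangulated T"
begin

definition H :: "'o \<Rightarrow> 'o \<Rightarrow> 'm set" where
  "H A B = {f. A \<in> Ob T \<and> B \<in> Ob T \<and> f \<in> Hom T A B}"

lemma H_iff: "f \<in> H A B \<longleftrightarrow> A \<in> Ob T \<and> B \<in> Ob T \<and> f \<in> Hom T A B"
  by (simp add: H_def)

lemma HD: assumes "f \<in> H A B" shows "A \<in> Ob T" "B \<in> Ob T" "f \<in> Hom T A B"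
  using assms by (auto simp: H_def)

lemma add_cat: "additive_cat T" using tri by (simp add: triangulated_def)
lemma shift_ax: "shift_autoequiv T" using tri by (simp add: triangulated_def)

lemmas AC = add_cat[unfolded additive_cat_def]
lemma c2: "\<forall>A\<in>Ob T. idm T A \<in> Hom T A A" using AC by (elim conjE) assumption
lemma c3: "\<forall>A\<in>Ob T. \<forall>B\<in>Ob T. \<forall>C\<in>Ob T. \<forall>f\<in>Hom T A B. \<forall>g\<in>Hom T B C.
        cmp T g f \<in> Hom T A C" using AC by (elim conjE) assumption
lemma c4: "\<forall>A\<in>Ob T. \<forall>B\<in>Ob T. \<forall>f\<in>Hom T A B.
        cmp T (idm T B) f = f \<and> cmp T f (idm T A) = f" using AC by (elim conjE) assumption
lemma c5: "\<forall>A\<in>Ob T. \<forall>B\<in>Ob T. \<forall>C\<in>Ob T. \<forall>D\<in>Ob T.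
        \<forall>f\<in>Hom T A B. \<forall>g\<in>Hom T B C. \<forall>h\<in>Hom T C D.
        cmp T h (cmp T g f) = cmp T (cmp T h g) f" using AC by (elim conjE) assumption
lemma c6: "\<forall>A\<in>Ob T. \<forall>B\<in>Ob T.
        zer T A B \<in> Hom T A B \<and>
        (\<forall>f\<in>Hom T A B. \<forall>g\<in>Hom T A B. add T f g \<in> Hom T A B) \<and>
        (\<forall>f\<in>Hom T A B. neg T f \<in> Hom T A B) \<and>
        (\<forall>f\<in>Hom T A B. \<forall>g\<in>Hom T A B. \<forall>h\<in>Hom T A B.
            add T (add T f g) h = add T f (add T g h)) \<and>
        (\<forall>f\<in>Hom T A B. \<forall>g\<in>Hom T A B. add T f g = add T g f) \<and>
        (\<forall>f\<in>Hom T A B. add T f (zer T A B) = f) \<and>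
        (\<forall>f\<in>Hom T A B. add T f (neg T f) = zer T A B)" using AC by (elim conjE) assumption
lemma c7: "\<forall>A\<in>Ob T. \<forall>B\<in>Ob T. \<forall>C\<in>Ob T.
        \<forall>f\<in>Hom T A B. \<forall>f'\<in>Hom T A B. \<forall>g\<in>Hom T B C. \<forall>g'\<in>Hom T B C.
        cmp T g (add T f f') = add T (cmp T g f) (cmp T g f') \<and>
        cmp T (add T g g') f = add T (cmp T g f) (cmp T g' f)" using AC by (elim conjE) assumption

lemma id_H: "A \<in> Ob T \<Longrightarrow> idm T A \<in> H A A"
  using c2 by (simp add: H_def)
lemma comp_H: "f \<in> H A B \<Longrightarrow> g \<in> H B C \<Longrightarrow> cmp T g f \<in> H A C"
  using c3 unfolding H_def by blast
lemma id_l: "f \<in> H A B \<Longrightarrow> cmp T (idm T B) f = f"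
  using c4 unfolding H_def by blast
lemma id_r: "f \<in> H A B \<Longrightarrow> cmp T f (idm T A) = f"
  using c4 unfolding H_def by blast
lemma assoc: "f \<in> H A B \<Longrightarrow> g \<in> H B C \<Longrightarrow> h \<in> H C D \<Longrightarrow>
   cmp T h (cmp T g f) = cmp T (cmp T h g) f"
  using c5 unfolding H_def by blast
lemma zer_H: "A \<in> Ob T \<Longrightarrow> B \<in> Ob T \<Longrightarrow> zer T A B \<in> H A B"
  using c6 unfolding H_def by blast
lemma add_H: "f \<in> H A B \<Longrightarrow> g \<in> H A B \<Longrightarrow> add T f g \<in> H A B"
  using c6 unfolding H_def by blast
lemma neg_H: "f \<in> H A B \<Longrightarrow> neg T f \<in> H A B"
  using c6 unfolding H_def by blast
lemma add_assoc: "f \<in> H A B \<Longrightarrow> g \<in> H A B \<Longrightarrow> h \<in> H A B \<Longrightarrow>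
   add T (add T f g) h = add T f (add T g h)"
  using c6 unfolding H_def by blast
lemma add_comm: "f \<in> H A B \<Longrightarrow> g \<in> H A B \<Longrightarrow> add T f g = add T g f"
  using c6 unfolding H_def by blast
lemma add_zero: "f \<in> H A B \<Longrightarrow> add T f (zer T A B) = f"
  using c6 unfolding H_def by blast
lemma add_neg: "f \<in> H A B \<Longrightarrow> add T f (neg T f) = zer T A B"
  using c6 unfolding H_def by blast
lemma bil_r: "f \<in> H A B \<Longrightarrow> f' \<in> H A B \<Longrightarrow> g \<in> H B C \<Longrightarrow>
   cmp T g (add T f f') = add T (cmp T g f) (cmp T g f')"
  using c7 unfolding H_def by blast
lemma bil_l: "f \<in> H A B \<Longrightarrow> g \<in> H B C \<Longrightarrow> g' \<in> H B C \<Longrightarrow>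
   cmp T (add T g g') f = add T (cmp T g f) (cmp T g' f)"
  using c7 unfolding H_def by blast
lemma zero_obj_ex: "\<exists>Z. is_zero_obj T Z"
  using AC by blast
lemma biprod_ex: "A \<in> Ob T \<Longrightarrow> B \<in> Ob T \<Longrightarrow> \<exists>P i1 i2 p1 p2. is_biprod T A B P i1 i2 p1 p2"
  using AC by blast

lemma zero_l: "f \<in> H A B \<Longrightarrow> add T (zer T A B) f = f"
  by (metis add_comm add_zero zer_H HD)

lemma add_cancel_l: assumes "f \<in> H A B" "g \<in> H A B" "h \<in> H A B" "add T f g = add T f h"
  shows "g = h"
proof -
  have n: "neg T f \<in> H A B" using assms neg_H by auto
  have e: "add T (neg T f) f = zer T A B" using assms n by (metis add_comm add_neg)
  have "g = add T (add T (neg T f) f) g" using e zero_l assms by simp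
  also have "\<dots> = add T (neg T f) (add T f g)" using add_assoc n assms by blast
  also have "\<dots> = add T (neg T f) (add T f h)" using assms by simp
  also have "\<dots> = add T (add T (neg T f) f) h" using add_assoc n assms by metis
  also have "\<dots> = h" using e zero_l assms by simp
  finally show ?thesis .
qed

lemma neg_unique: assumes "f \<in> H A B" "g \<in> H A B" "add T f g = zer T A B" shows "g = neg T f"
  using add_cancel_l[OF assms(1,2) neg_H[OF assms(1)]] assms add_neg by simp

lemma neg_neg: "f \<in> H A B \<Longrightarrow> neg T (neg T f) = f"
  by (metis add_comm add_neg neg_H neg_unique)

lemma sub_zero_eq: assumes "f \<in> H A B" "g \<in> H A B" "add T f (neg T g) = zer T A B" shows "f = g"
  using neg_unique[OF neg_H[OF assms(2)] assms(1)] assms by (metis add_comm neg_H neg_neg)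

lemma zero_double: assumes "x \<in> H A B" "add T x x = x" shows "x = zer T A B"
  using add_cancel_l[OF assms(1) assms(1) zer_H[OF HD(1,2)[OF assms(1)]]] assms add_zero by metis

lemma comp_zero_r: assumes "g \<in> H B C" "A \<in> Ob T" shows "cmp T g (zer T A B) = zer T A C"
proof -
  have B: "B \<in> Ob T" "C \<in> Ob T" using assms HD by auto
  have z: "zer T A B \<in> H A B" using zer_H assms B by auto
  have "cmp T g (zer T A B) = cmp T g (add T (zer T A B) (zer T A B))" using add_zero z by simp
  also have "\<dots> = add T (cmp T g (zer T A B)) (cmp T g (zer T A B))" using bil_r z assms by simp
  finally show ?thesis using zero_double comp_H z assms by metis
qed

lemma comp_zero_l: assumes "f \<in> H A B" "C \<in> Ob T" shows "cmp T (zer T B C) f = zer T A C"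
proof -
  have B: "A \<in> Ob T" "B \<in> Ob T" using assms HD by auto
  have z: "zer T B C \<in> H B C" using zer_H assms B by auto
  have "cmp T (zer T B C) f = cmp T (add T (zer T B C) (zer T B C)) f" using add_zero z by simp
  also have "\<dots> = add T (cmp T (zer T B C) f) (cmp T (zer T B C) f)" using bil_l z assms by simp
  finally show ?thesis using zero_double comp_H z assms by metis
qed

lemma comp_neg_r: assumes "f \<in> H A B" "g \<in> H B C" shows "cmp T g (neg T f) = neg T (cmp T g f)"
proof -
  have "add T (cmp T g f) (cmp T g (neg T f)) = cmp T g (add T f (neg T f))"
    using bil_r assms neg_H by simp
  also have "\<dots> = zer T A C" using add_neg assms comp_zero_r HD by metis
  finally show ?thesis using neg_unique comp_H neg_H assms by metis
qed

lemma comp_neg_l: assumes "f \<in> H A B" "g \<in> H B C" shows "cmp T (neg T g) f = neg T (cmp T g f)"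
proof -
  have "add T (cmp T g f) (cmp T (neg T g) f) = cmp T (add T g (neg T g)) f"
    using bil_l assms neg_H by simp
  also have "\<dots> = zer T A C" using add_neg assms comp_zero_l HD by metis
  finally show ?thesis using neg_unique comp_H neg_H assms by metis
qed

lemma neg_zero: "A \<in> Ob T \<Longrightarrow> B \<in> Ob T \<Longrightarrow> neg T (zer T A B) = zer T A B"
  by (metis add_neg zero_l neg_H zer_H)

end



context TC begin

abbreviation "sO \<equiv> shO T"
abbreviation "sM \<equiv> shM T"
abbreviation "cm \<equiv> cmp T"
abbreviation "ng \<equiv> neg T"
abbreviation "zr \<equiv> zer T"
abbreviation "ad \<equiv> add T"
abbreviation "idt \<equiv> idm T"
abbreviation "Tr \<equiv> tri T"

lemmas SA = shift_ax[unfolded shift_autoequiv_def]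
lemma s1: "\<forall>A\<in>Ob T. shO T A \<in> Ob T" using SA by (elim conjE) assumption
lemma s2: "\<forall>A\<in>Ob T. \<forall>B\<in>Ob T. bij_betw (shM T) (Hom T A B) (Hom T (shO T A) (shO T B))"
  using SA by (elim conjE) assumption
lemma s3: "\<forall>A\<in>Ob T. shM T (idm T A) = idm T (shO T A)" using SA by (elim conjE) assumption
lemma s4: "\<forall>A\<in>Ob T. \<forall>B\<in>Ob T. \<forall>C\<in>Ob T. \<forall>f\<in>Hom T A B. \<forall>g\<in>Hom T B C.
        shM T (cmp T g f) = cmp T (shM T g) (shM T f)" using SA by (elim conjE) assumption
lemma s5: "\<forall>A\<in>Ob T. \<forall>B\<in>Ob T. \<forall>f\<in>Hom T A B. \<forall>g\<in>Hom T A B.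
        shM T (add T f g) = add T (shM T f) (shM T g)" using SA by (elim conjE) assumption
lemma s6: "\<forall>B\<in>Ob T. \<exists>A\<in>Ob T. \<exists>f. is_iso T (shO T A) B f" using SA by (elim conjE) assumption

lemma sO_Ob: "A \<in> Ob T \<Longrightarrow> sO A \<in> Ob T" using s1 by blast
lemma sM_H: "f \<in> H A B \<Longrightarrow> sM f \<in> H (sO A) (sO B)"
  using s2 sO_Ob unfolding H_def bij_betw_def by blast
lemma sM_inj: "f \<in> H A B \<Longrightarrow> g \<in> H A B \<Longrightarrow> sM f = sM g \<Longrightarrow> f = g"
  using s2 unfolding H_def bij_betw_def inj_on_def by blast
lemma sM_surj: assumes "h \<in> H (sO A) (sO B)" "A \<in> Ob T" "B \<in> Ob T"
  shows "\<exists>f\<in>H A B. sM f = h"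
proof -
  have "h \<in> sM ` Hom T A B" using s2 assms unfolding H_def bij_betw_def by blast
  thus ?thesis using assms unfolding H_def by blast
qed
lemma sM_id: "A \<in> Ob T \<Longrightarrow> sM (idt A) = idt (sO A)" using s3 by blast
lemma sM_comp: "f \<in> H A B \<Longrightarrow> g \<in> H B C \<Longrightarrow> sM (cm g f) = cm (sM g) (sM f)"
  using s4 unfolding H_def by blast
lemma sM_add: "f \<in> H A B \<Longrightarrow> g \<in> H A B \<Longrightarrow> sM (ad f g) = ad (sM f) (sM g)"
  using s5 unfolding H_def by blast
lemma ess_surj: "B \<in> Ob T \<Longrightarrow> \<exists>A\<in>Ob T. \<exists>f. is_iso T (sO A) B f" using s6 by blast

lemma sM_zero: assumes "A \<in> Ob T" "B \<in> Ob T" shows "sM (zr A B) = zr (sO A) (sO B)"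
proof -
  have z: "zr A B \<in> H A B" using zer_H assms by auto
  have "sM (zr A B) = sM (ad (zr A B) (zr A B))" using add_zero z by simp
  also have "\<dots> = ad (sM (zr A B)) (sM (zr A B))" using sM_add z by simp
  finally show ?thesis using zero_double sM_H z by metis
qed

lemma sM_neg: assumes "f \<in> H A B" shows "sM (ng f) = ng (sM f)"
proof -
  have "ad (sM f) (sM (ng f)) = sM (ad f (ng f))" using sM_add assms neg_H by simp
  also have "\<dots> = zr (sO A) (sO B)" using add_neg assms sM_zero HD by metis
  finally show ?thesis using neg_unique sM_H neg_H assms by metis
qed

lemma neg_comp_neg: assumes "f \<in> H A B" "g \<in> H B C" shows "cm (ng g) (ng f) = cm g f"
  using assms comp_neg_l comp_neg_r neg_neg neg_H comp_H by metis

lemma neg_inj: "f \<in> H A B \<Longrightarrow> g \<in> H A B \<Longrightarrow> ng f = ng g \<Longrightarrow> f = g"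
  by (metis neg_neg)

lemmas TA = tri[unfolded triangulated_def]
lemma t0: "\<forall>(A,B,C,f,g,h)\<in>tri T. typed_triangle T A B C f g h" using TA by (elim conjE) assumption
lemma t1: "\<forall>A B C f g h A' B' C' f' g' h' a b c.
        (A,B,C,f,g,h) \<in> tri T \<and> typed_triangle T A' B' C' f' g' h' \<and>
        is_iso T A A' a \<and> is_iso T B B' b \<and> is_iso T C C' c \<and>
        cmp T b f = cmp T f' a \<and> cmp T c g = cmp T g' b \<and>
        cmp T (shM T a) h = cmp T h' c
        \<longrightarrow> (A',B',C',f',g',h') \<in> tri T" using TA by (elim conjE) assumption
lemma t1b: "\<forall>A\<in>Ob T. \<forall>Z. is_zero_obj T Z \<longrightarrow>
        (A, A, Z, idm T A, zer T A Z, zer T Z (shO T A)) \<in> tri T" using TA by (elim conjE) assumption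
lemma t1c: "\<forall>A\<in>Ob T. \<forall>B\<in>Ob T. \<forall>f\<in>Hom T A B. \<exists>C g h. (A,B,C,f,g,h) \<in> tri T"
   using TA by (elim conjE) assumption
lemma t2: "\<forall>A B C f g h. typed_triangle T A B C f g h \<longrightarrow>
        ((A,B,C,f,g,h) \<in> tri T \<longleftrightarrow> (B, C, shO T A, g, h, neg T (shM T f)) \<in> tri T)"
   using TA by (elim conjE) assumption
lemma t3: "\<forall>A B C f g h A' B' C' f' g' h' a b.
        (A,B,C,f,g,h) \<in> tri T \<and> (A',B',C',f',g',h') \<in> tri T \<and>
        a \<in> Hom T A A' \<and> b \<in> Hom T B B' \<and> cmp T b f = cmp T f' a
        \<longrightarrow> (\<exists>c\<in>Hom T C C'. cmp T c g = cmp T g' b \<and> cmp T (shM T a) h = cmp T h' c)"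
   using TA by (elim conjE) assumption
lemma t4: "\<forall>A B C f g C' u u' A' v v' B' w w'.
        (A,B,C',f,u,u') \<in> tri T \<and> (B,C,A',g,v,v') \<in> tri T \<and>
        (A,C,B',cmp T g f,w,w') \<in> tri T
        \<longrightarrow> (\<exists>a b. (C',B',A',a,b, cmp T (shM T u) v') \<in> tri T \<and>
               cmp T a u = cmp T w g \<and> cmp T w' a = u' \<and>
               cmp T b w = v \<and> cmp T v' b = cmp T (shM T f) w')" using TA by (elim conjE) assumption

lemma typed_iff: "typed_triangle T A B C f g h \<longleftrightarrow> f \<in> H A B \<and> g \<in> H B C \<and> h \<in> H C (sO A)"
  unfolding typed_triangle_def H_def using sO_Ob by auto

lemma trT0: assumes "(A,B,C,f,g,h) \<in> Tr" shows "typed_triangle T A B C f g h"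
  using t0 assms by fastforce
lemma trT: assumes "(A,B,C,f,g,h) \<in> Tr" shows "f \<in> H A B" "g \<in> H B C" "h \<in> H C (sO A)"
  "A \<in> Ob T" "B \<in> Ob T" "C \<in> Ob T"
  using trT0[OF assms] typed_iff unfolding typed_triangle_def H_def by auto

lemma rot: assumes "(A,B,C,f,g,h) \<in> Tr" shows "(B,C,sO A,g,h,ng (sM f)) \<in> Tr"
proof -
  have ty: "typed_triangle T A B C f g h" using typed_iff trT[OF assms] by simp
  show ?thesis using t2[rule_format, OF ty] assms by simp
qed

lemma rot_iff: assumes "f \<in> H A B" "g \<in> H B C" "h \<in> H C (sO A)"
  shows "(A,B,C,f,g,h) \<in> Tr \<longleftrightarrow> (B,C,sO A,g,h,ng (sM f)) \<in> Tr"
proof -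
  have ty: "typed_triangle T A B C f g h" using typed_iff assms by simp
  show ?thesis using t2[rule_format, OF ty] by simp
qed

lemma iso_cl: assumes "(A,B,C,f,g,h) \<in> Tr" "f' \<in> H A' B'" "g' \<in> H B' C'" "h' \<in> H C' (sO A')"
  "is_iso T A A' a" "is_iso T B B' b" "is_iso T C C' c"
  "cm b f = cm f' a" "cm c g = cm g' b" "cm (sM a) h = cm h' c"
  shows "(A',B',C',f',g',h') \<in> Tr"
proof -
  have ty: "typed_triangle T A' B' C' f' g' h'" using typed_iff assms by simp
  show ?thesis using t1[rule_format, of A B C f g h A' B' C' f' g' h' a b c] ty assms by blast
qed

lemma tr3: assumes "(A,B,C,f,g,h) \<in> Tr" "(A',B',C',f',g',h') \<in> Tr" "a \<in> H A A'" "b \<in> H B B'"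
   "cm b f = cm f' a"
  shows "\<exists>c\<in>H C C'. cm c g = cm g' b \<and> cm (sM a) h = cm h' c"
proof -
  have "C \<in> Ob T" "C' \<in> Ob T" using trT assms by auto
  thus ?thesis using t3 assms unfolding H_def by blast
qed

lemma tr_ex: "f \<in> H A B \<Longrightarrow> \<exists>C g h. (A,B,C,f,g,h) \<in> Tr"
  using t1c unfolding H_def by blast

lemma tr_zero: "A \<in> Ob T \<Longrightarrow> is_zero_obj T Z \<Longrightarrow> (A, A, Z, idt A, zr A Z, zr Z (sO A)) \<in> Tr"
  using t1b by blast

lemma iso_H: "is_iso T A B f \<Longrightarrow> A \<in> Ob T \<Longrightarrow> B \<in> Ob T \<Longrightarrow> f \<in> H A B"
  unfolding is_iso_def H_def by auto

lemma iso_inv: assumes "is_iso T A B f" "A \<in> Ob T" "B \<in> Ob T"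
  obtains g where "g \<in> H B A" "cm g f = idt A" "cm f g = idt B" "is_iso T B A g"
  using assms unfolding is_iso_def H_def by blast

lemma id_iso: "A \<in> Ob T \<Longrightarrow> is_iso T A A (idt A)"
  unfolding is_iso_def using id_H id_l HD by blast

lemma zero_objD: "is_zero_obj T Z \<Longrightarrow> A \<in> Ob T \<Longrightarrow> f \<in> H Z A \<Longrightarrow> f = zr Z A"
  unfolding is_zero_obj_def H_def by auto
lemma zero_objD2: "is_zero_obj T Z \<Longrightarrow> A \<in> Ob T \<Longrightarrow> f \<in> H A Z \<Longrightarrow> f = zr A Z"
  unfolding is_zero_obj_def H_def by auto
lemma zero_obj_Ob: "is_zero_obj T Z \<Longrightarrow> Z \<in> Ob T" unfolding is_zero_obj_def by auto

end



context TC begin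

lemma add_swap23: assumes "a \<in> H A B" "b \<in> H A B" "c \<in> H A B"
  shows "ad a (ad b c) = ad (ad a c) b"
  using assms by (metis add_assoc add_comm)

lemma sub_add_cancel: assumes "a \<in> H A B" "b \<in> H A B" shows "ad (ad a (ng b)) b = a"
proof -
  have "ad (ad a (ng b)) b = ad a (ad (ng b) b)" using add_assoc assms neg_H by blast
  also have "ad (ng b) b = zr A B" using assms add_comm add_neg neg_H by metis
  finally show ?thesis using add_zero assms by simp
qed

lemma comp_sub_r: assumes "f \<in> H A B" "f' \<in> H A B" "g \<in> H B C"
  shows "cm g (ad f (ng f')) = ad (cm g f) (ng (cm g f'))"
  using bil_r comp_neg_r assms neg_H by metis
lemma comp_sub_l: assumes "f \<in> H A B" "g \<in> H B C" "g' \<in> H B C"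
  shows "cm (ad g (ng g')) f = ad (cm g f) (ng (cm g' f))"
  using bil_l comp_neg_l assms neg_H by metis

lemma sub_self: "a \<in> H A B \<Longrightarrow> ad a (ng a) = zr A B" by (rule add_neg)

lemma obtain_zero: obtains Z where "is_zero_obj T Z" "Z \<in> Ob T"
  using zero_obj_ex zero_obj_Ob by blast

lemma tri_comp0: assumes "(A,B,C,f,g,h) \<in> Tr" shows "cm g f = zr A C"
proof -
  obtain Z where Z: "is_zero_obj T Z" "Z \<in> Ob T" by (rule obtain_zero)
  have A: "A \<in> Ob T" "C \<in> Ob T" using trT assms by auto
  have t: "(A, A, Z, idt A, zr A Z, zr Z (sO A)) \<in> Tr" using tr_zero A Z by blast
  have f: "f \<in> H A B" using trT assms by auto
  obtain c where c: "c \<in> H Z C" "cm c (zr A Z) = cm g f"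
    using tr3[OF t assms id_H[OF A(1)] f] by blast
  show ?thesis using c comp_zero_r A by metis
qed

lemma tri_comp1: assumes "(A,B,C,f,g,h) \<in> Tr" shows "cm h g = zr B (sO A)"
  using tri_comp0[OF rot[OF assms]] .

lemma tri_comp2: assumes "(A,B,C,f,g,h) \<in> Tr" shows "cm (sM f) h = zr C (sO B)"
proof -
  have r: "(C, sO A, sO B, h, ng (sM f), ng (sM g)) \<in> Tr" using rot[OF rot[OF assms]] .
  have "cm (ng (sM f)) h = zr C (sO B)" using tri_comp0[OF r] .
  hence "ng (cm (sM f) h) = zr C (sO B)" using comp_neg_l trT assms sM_H by metis
  thus ?thesis using neg_neg neg_zero trT assms sM_H comp_H sO_Ob by metis
qed

lemma tri_LZ: assumes "Z \<in> Ob T" "is_zero_obj T Zo"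
  shows "(Zo, Z, Z, zr Zo Z, idt Z, zr Z (sO Zo)) \<in> Tr"
proof -
  have Zo: "Zo \<in> Ob T" using zero_obj_Ob assms by blast
  obtain Y e where Y: "Y \<in> Ob T" "is_iso T (sO Y) Z e" using ess_surj assms by blast
  have SY: "sO Y \<in> Ob T" "sO Zo \<in> Ob T" using sO_Ob Y Zo by auto
  have eH: "e \<in> H (sO Y) Z" using iso_H Y SY assms by blast
  obtain e' where e': "e' \<in> H Z (sO Y)" "cm e' e = idt (sO Y)" "cm e e' = idt Z"
    using iso_inv[OF Y(2) SY(1) assms(1)] by metis
  have t0: "(Y,Y,Zo,idt Y, zr Y Zo, zr Zo (sO Y)) \<in> Tr" using tr_zero Y assms by blast
  have t1: "(Zo, sO Y, sO Y, zr Zo (sO Y), ng (sM (idt Y)), ng (sM (zr Y Zo))) \<in> Tr"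
    using rot[OF rot[OF t0]] .
  have t2: "(Zo, sO Y, sO Y, zr Zo (sO Y), ng (idt (sO Y)), zr (sO Y) (sO Zo)) \<in> Tr"
    using t1 sM_id sM_zero neg_zero Y Zo SY by metis
  have nid: "ng (idt (sO Y)) \<in> H (sO Y) (sO Y)" using neg_H id_H SY by blast
  have ne: "ng e \<in> H (sO Y) Z" using neg_H eH by blast
  have ne': "ng e' \<in> H Z (sO Y)" using neg_H e' by blast
  have iso_ne: "is_iso T (sO Y) Z (ng e)"
    unfolding is_iso_def using ne ne' e' eH neg_comp_neg HD by (metis)
  show ?thesis
  proof (rule iso_cl[OF t2])
    show "zr Zo Z \<in> H Zo Z" using zer_H Zo assms by blast
    show "idt Z \<in> H Z Z" using id_H assms by blast
    show "zr Z (sO Zo) \<in> H Z (sO Zo)" using zer_H SY assms by blast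
    show "is_iso T Zo Zo (idt Zo)" using id_iso Zo by blast
    show "is_iso T (sO Y) Z e" using Y by blast
    show "is_iso T (sO Y) Z (ng e)" using iso_ne .
    show "cm e (zr Zo (sO Y)) = cm (zr Zo Z) (idt Zo)"
      using comp_zero_r eH Zo id_r zer_H assms by metis
    show "cm (ng e) (ng (idt (sO Y))) = cm (idt Z) e"
      using neg_comp_neg id_H SY eH id_l id_r by metis
    show "cm (sM (idt Zo)) (zr (sO Y) (sO Zo)) = cm (zr Z (sO Zo)) (ng e)"
      using sM_id Zo id_l zer_H SY comp_zero_l ne by metis
  qed
qed

lemma cov_exact: assumes t: "(A,B,C,f,g,h) \<in> Tr" and phi: "\<phi> \<in> H Z B" and e: "cm g \<phi> = zr Z C"
  shows "\<exists>u\<in>H Z A. \<phi> = cm f u"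
proof -
  obtain Zo where Zo: "is_zero_obj T Zo" "Zo \<in> Ob T" by (rule obtain_zero)
  have Ob: "A \<in> Ob T" "B \<in> Ob T" "C \<in> Ob T" "Z \<in> Ob T" using trT t HD phi by auto
  have t0: "(Z, Z, Zo, idt Z, zr Z Zo, zr Zo (sO Z)) \<in> Tr" using tr_zero Ob Zo by blast
  have t1: "(Z, Zo, sO Z, zr Z Zo, zr Zo (sO Z), ng (sM (idt Z))) \<in> Tr" using rot[OF t0] .
  have t2: "(B, C, sO A, g, h, ng (sM f)) \<in> Tr" using rot[OF t] .
  have zb: "zr Zo C \<in> H Zo C" using zer_H Zo Ob by blast
  have "cm (zr Zo C) (zr Z Zo) = zr Z C" using comp_zero_l zer_H Zo Ob by metis
  hence cc: "cm (zr Zo C) (zr Z Zo) = cm g \<phi>" using e by simp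
  obtain c where c: "c \<in> H (sO Z) (sO A)" "cm (sM \<phi>) (ng (sM (idt Z))) = cm (ng (sM f)) c"
    using tr3[OF t1 t2 phi zb cc] by blast
  have fH: "f \<in> H A B" using trT t by auto
  have "cm (sM \<phi>) (ng (sM (idt Z))) = ng (sM \<phi>)"
    using sM_id Ob comp_neg_r id_H sO_Ob sM_H phi id_r by metis
  moreover have "cm (ng (sM f)) c = ng (cm (sM f) c)" using comp_neg_l c sM_H fH by metis
  ultimately have "sM \<phi> = cm (sM f) c" using c(2) neg_inj sM_H phi comp_H c(1) fH by metis
  moreover obtain u where u: "u \<in> H Z A" "sM u = c" using sM_surj c Ob by blast
  ultimately have "sM \<phi> = sM (cm f u)" using sM_comp fH by metis
  hence "\<phi> = cm f u" using sM_inj phi comp_H u fH by metis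
  thus ?thesis using u by blast
qed

lemma contra_exact: assumes t: "(A,B,C,f,g,h) \<in> Tr" and phi: "\<phi> \<in> H B Z" and e: "cm \<phi> f = zr A Z"
  shows "\<exists>u\<in>H C Z. \<phi> = cm u g"
proof -
  obtain Zo where Zo: "is_zero_obj T Zo" "Zo \<in> Ob T" by (rule obtain_zero)
  have Ob: "A \<in> Ob T" "B \<in> Ob T" "C \<in> Ob T" "Z \<in> Ob T" using trT t HD phi by auto
  have t1: "(Zo, Z, Z, zr Zo Z, idt Z, zr Z (sO Zo)) \<in> Tr" using tri_LZ Ob Zo by blast
  have za: "zr A Zo \<in> H A Zo" using zer_H Zo Ob by blast
  have "cm (zr Zo Z) (zr A Zo) = zr A Z" using comp_zero_l zer_H Zo Ob by metis
  hence cc: "cm \<phi> f = cm (zr Zo Z) (zr A Zo)" using e by simp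
  obtain c where c: "c \<in> H C Z" "cm c g = cm (idt Z) \<phi>"
    using tr3[OF t t1 za phi cc] by blast
  thus ?thesis using id_l phi by metis
qed

lemma cov_exact3: assumes t: "(A,B,C,f,g,h) \<in> Tr" and phi: "\<phi> \<in> H Z C" and e: "cm h \<phi> = zr Z (sO A)"
  shows "\<exists>u\<in>H Z B. \<phi> = cm g u"
  using cov_exact[OF rot[OF t] phi e] .

lemma contra_exact3: assumes t: "(A,B,C,f,g,h) \<in> Tr" and phi: "\<phi> \<in> H C Z" and e: "cm \<phi> g = zr B Z"
  shows "\<exists>u\<in>H (sO A) Z. \<phi> = cm u h"
  using contra_exact[OF rot[OF t] phi e] .

lemma cov_exact1: assumes t: "(A,B,C,f,g,h) \<in> Tr" and phi: "\<phi> \<in> H Z A" and e: "cm f \<phi> = zr Z B"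
  shows "\<exists>u\<in>H (sO Z) C. sM \<phi> = cm h u"
proof -
  have r: "(C, sO A, sO B, h, ng (sM f), ng (sM g)) \<in> Tr" using rot[OF rot[OF t]] .
  have fH: "f \<in> H A B" using trT t by auto
  have Z: "Z \<in> Ob T" using HD phi by auto
  have "cm (ng (sM f)) (sM \<phi>) = ng (sM (cm f \<phi>))" using comp_neg_l sM_comp sM_H phi fH by metis
  also have "\<dots> = zr (sO Z) (sO B)" using e sM_zero neg_zero Z HD fH sO_Ob by metis
  finally show ?thesis using cov_exact[OF r sM_H[OF phi]] by blast
qed

lemma contra_exact1: assumes t: "(A,B,C,f,g,h) \<in> Tr" and phi: "\<phi> \<in> H (sO A) Z" and e: "cm \<phi> h = zr C Z"
  shows "\<exists>u\<in>H (sO B) Z. \<phi> = cm u (ng (sM f))"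
  using contra_exact[OF rot[OF rot[OF t]] phi e] .

end



context TC begin

lemma split_tri: assumes t: "(A,B,C,f,g,h) \<in> Tr" and h0: "h = zr C (sO A)"
  shows "\<exists>i2 p. is_biprod T A C B f i2 p g"
proof -
  have Ob: "A \<in> Ob T" "B \<in> Ob T" "C \<in> Ob T" "sO A \<in> Ob T" "sO B \<in> Ob T"
    using trT t sO_Ob by auto
  have fH: "f \<in> H A B" and gH: "g \<in> H B C" and hH: "h \<in> H C (sO A)" using trT t by auto
  have "cm h (idt C) = zr C (sO A)" using id_r hH h0 by metis
  then obtain t' where t': "t' \<in> H C B" "idt C = cm g t'"
    using cov_exact3[OF t id_H[OF Ob(3)]] by metis
  have "cm (idt (sO A)) h = zr C (sO A)" using id_l hH h0 by metis
  then obtain u where u: "u \<in> H (sO B) (sO A)" "idt (sO A) = cm u (ng (sM f))"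
    using contra_exact1[OF t id_H[OF Ob(4)]] by metis
  obtain p0 where p0: "p0 \<in> H B A" "sM p0 = u" using sM_surj u Ob by blast
  have "cm u (ng (sM f)) = ng (sM (cm p0 f))" using p0 comp_neg_r sM_comp sM_H fH by metis
  also have "\<dots> = sM (ng (cm p0 f))" using sM_neg comp_H p0 fH by metis
  finally have "idt (sO A) = sM (ng (cm p0 f))" using u by simp
  hence "sM (idt A) = sM (ng (cm p0 f))" using sM_id Ob by simp
  hence pf0: "idt A = ng (cm p0 f)" using sM_inj[OF id_H[OF Ob(1)] neg_H[OF comp_H[OF fH p0(1)]]] by blast
  define p where "p = ng p0"
  have pH: "p \<in> H B A" using p_def neg_H p0 by simp
  have pf: "cm p f = idt A" using p_def comp_neg_l p0 fH pf0 by metis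
  define i2 where "i2 = ad t' (ng (cm f (cm p t')))"
  have fpt: "cm f (cm p t') \<in> H C B" using comp_H fH pH t' by blast
  have i2H: "i2 \<in> H C B" using i2_def add_H neg_H fpt t' by blast
  have gf: "cm g f = zr A C" using tri_comp0[OF t] .
  have pt: "cm p t' \<in> H C A" using comp_H[OF t'(1) pH] .
  have c1: "cm g i2 = ad (cm g t') (ng (cm g (cm f (cm p t'))))"
    using comp_sub_r[OF t'(1) fpt gH] i2_def by simp
  have c2: "cm g (cm f (cm p t')) = cm (cm g f) (cm p t')" by (rule assoc[OF pt fH gH])
  have c3: "cm (cm g f) (cm p t') = zr C C" using gf comp_zero_l[OF pt Ob(3)] by simp
  have gi2: "cm g i2 = idt C" using c1 c2 c3 t'(2)[symmetric] neg_zero[OF Ob(3) Ob(3)]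
     add_zero[OF id_H[OF Ob(3)]] by simp
  have d1: "cm p i2 = ad (cm p t') (ng (cm p (cm f (cm p t'))))"
    using comp_sub_r[OF t'(1) fpt pH] i2_def by simp
  have d2: "cm p (cm f (cm p t')) = cm (cm p f) (cm p t')" by (rule assoc[OF pt fH pH])
  have d3: "cm (cm p f) (cm p t') = cm p t'" using pf id_l[OF pt] by simp
  have pi2: "cm p i2 = zr C A" using d1 d2 d3 add_neg[OF pt] by simp
  define x where "x = cm f p"
  define y where "y = cm t' g"
  have xH: "x \<in> H B B" using x_def comp_H fH pH by blast
  have yH: "y \<in> H B B" using y_def comp_H gH t' by blast
  have idB: "idt B \<in> H B B" using id_H Ob by blast
  define e where "e = ad (idt B) (ng y)"
  have eH: "e \<in> H B B" using e_def add_H neg_H idB yH by blast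
  have e1: "cm g e = ad (cm g (idt B)) (ng (cm g y))" using e_def comp_sub_r[OF idB yH gH] by simp
  have e2: "cm g y = cm (cm g t') g" using y_def assoc[OF gH t'(1) gH] by simp
  have e3: "cm (cm g t') g = g" using t'(2)[symmetric] id_l[OF gH] by simp
  have e4: "cm g (idt B) = g" using id_r[OF gH] .
  have "cm g e = zr B C" using e1 e2 e3 e4 add_neg[OF gH] by simp
  then obtain w where w: "w \<in> H B A" "e = cm f w" using cov_exact[OF t eH] by blast
  have x1: "cm x e = cm (cm f p) (cm f w)" using x_def w by simp
  have x2: "cm (cm f p) (cm f w) = cm f (cm p (cm f w))"
    using assoc[OF comp_H[OF w(1) fH] pH fH] by simp
  have x3: "cm p (cm f w) = cm (cm p f) w" using assoc[OF w(1) fH pH] .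
  have xe: "cm x e = e" using x1 x2 x3 pf id_l[OF w(1)] w(2) by simp
  have "cm x e = ad (cm x (idt B)) (ng (cm x y))" using e_def comp_sub_r[OF idB yH xH] by simp
  hence xe2: "ad x (ng (cm x y)) = e" using xe id_r[OF xH] by simp
  have i1: "cm i2 g = ad (cm t' g) (ng (cm (cm f (cm p t')) g))"
    using i2_def comp_sub_l[OF gH t'(1) fpt] by simp
  have i2: "cm (cm f (cm p t')) g = cm x y"
  proof -
    have "cm (cm f (cm p t')) g = cm f (cm (cm p t') g)" using assoc[OF gH pt fH] by simp
    also have "cm (cm p t') g = cm p (cm t' g)" using assoc[OF gH t'(1) pH] by simp
    also have "cm f (cm p (cm t' g)) = cm (cm f p) (cm t' g)" using assoc[OF yH[unfolded y_def] pH fH] .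
    finally show ?thesis using x_def y_def by simp
  qed
  have i2g: "cm i2 g = ad y (ng (cm x y))" using i1 i2 y_def by simp
  have xyH: "cm x y \<in> H B B" using comp_H xH yH by blast
  have "ad x (cm i2 g) = ad (ad x (ng (cm x y))) y" using i2g add_swap23[OF xH yH neg_H[OF xyH]] by simp
  also have "\<dots> = idt B" using xe2 e_def sub_add_cancel[OF idB yH] by simp
  finally have sum: "ad (cm f p) (cm i2 g) = idt B" using x_def by simp
  have "is_biprod T A C B f i2 p g"
    unfolding is_biprod_def using Ob HD(3)[OF fH] HD(3)[OF gH] HD(3)[OF pH] HD(3)[OF i2H] pf gi2 pi2 gf sum
    by simp
  thus ?thesis by blast
qed

lemma rotback: assumes t: "(B,C,D,g,h,k) \<in> Tr" and A: "A \<in> Ob T" and e: "is_iso T (sO A) D e"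
  shows "\<exists>f t. f \<in> H A B \<and> t \<in> H C (sO A) \<and> (A,B,C,f,g,t) \<in> Tr \<and> cm e t = h"
proof -
  have Ob: "B \<in> Ob T" "C \<in> Ob T" "D \<in> Ob T" "sO A \<in> Ob T" "sO B \<in> Ob T"
    using trT t sO_Ob A by auto
  have gH: "g \<in> H B C" and hH: "h \<in> H C D" and kH: "k \<in> H D (sO B)" using trT t by auto
  have eH: "e \<in> H (sO A) D" using iso_H e Ob by blast
  obtain e' where e': "e' \<in> H D (sO A)" "cm e' e = idt (sO A)" "cm e e' = idt D" "is_iso T D (sO A) e'"
    using iso_inv[OF e Ob(4) Ob(3)] by blast
  have eh: "cm e' h \<in> H C (sO A)" using comp_H hH e' by blast
  have ke: "cm k e \<in> H (sO A) (sO B)" using comp_H kH eH by blast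
  have t1: "(B, C, sO A, g, cm e' h, cm k e) \<in> Tr"
  proof (rule iso_cl[OF t gH eh ke id_iso[OF Ob(1)] id_iso[OF Ob(2)] e'(4)])
    show "cm (idt C) g = cm g (idt B)" using id_l[OF gH] id_r[OF gH] by simp
    show "cm e' h = cm (cm e' h) (idt C)" using id_r[OF eh] by simp
    have "cm (cm k e) e' = cm k (cm e e')" using assoc[OF e'(1) eH kH] by simp
    also have "\<dots> = k" using e'(3) id_r[OF kH] by simp
    finally show "cm (sM (idt B)) k = cm (cm k e) e'" using sM_id[OF Ob(1)] id_l[OF kH] by simp
  qed
  obtain f where f: "f \<in> H A B" "sM f = ng (cm k e)" using sM_surj[OF neg_H[OF ke] A Ob(1)] by blast
  have "ng (sM f) = cm k e" using f neg_neg[OF ke] by simp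
  hence t2: "(B, C, sO A, g, cm e' h, ng (sM f)) \<in> Tr" using t1 by simp
  have t3: "(A,B,C,f,g,cm e' h) \<in> Tr" using rot_iff[OF f(1) gH eh] t2 by blast
  have "cm e (cm e' h) = h" using assoc[OF hH e'(1) eH] e'(3) id_l[OF hH] by simp
  thus ?thesis using f t3 eh by blast
qed

lemma rot3: assumes fH: "f \<in> H A B" and gH: "g \<in> H B C" and hH: "h \<in> H C (sO A)"
  and t: "(sO A, sO B, sO C, ng (sM f), ng (sM g), ng (sM h)) \<in> Tr"
  shows "(A,B,C,f,g,h) \<in> Tr"
proof -
  have nf: "ng (sM f) \<in> H (sO A) (sO B)" using neg_H sM_H fH by blast
  have ng: "ng (sM g) \<in> H (sO B) (sO C)" using neg_H sM_H gH by blast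
  have "(C, sO A, sO B, h, ng (sM f), ng (sM g)) \<in> Tr" using rot_iff[OF hH nf ng] t by blast
  hence "(B, C, sO A, g, h, ng (sM f)) \<in> Tr" using rot_iff[OF gH hH nf] by blast
  thus ?thesis using rot_iff[OF fH gH hH] by blast
qed

lemma retract_biprod: assumes i: "i \<in> H A P" and p: "p \<in> H P A" and pi: "cm p i = idt A"
  shows "\<exists>C i2 p1 p2. is_biprod T A C P i i2 p1 p2"
proof -
  obtain C g h where t: "(A,P,C,i,g,h) \<in> Tr" using tr_ex[OF i] by blast
  have hH: "h \<in> H C (sO A)" using trT t by auto
  have Ob: "A \<in> Ob T" "P \<in> Ob T" "C \<in> Ob T" using trT t by auto
  have c2: "cm (sM i) h = zr C (sO P)" using tri_comp2[OF t] .
  have "h = cm (idt (sO A)) h" using id_l[OF hH] by simp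
  also have "idt (sO A) = cm (sM p) (sM i)" using pi sM_comp[OF i p] sM_id[OF Ob(1)] by simp
  also have "cm (cm (sM p) (sM i)) h = cm (sM p) (cm (sM i) h)"
    using assoc[OF hH sM_H[OF i] sM_H[OF p]] by simp
  also have "\<dots> = zr C (sO A)" using c2 comp_zero_r[OF sM_H[OF p] Ob(3)] by simp
  finally show ?thesis using split_tri[OF t] by blast
qed

lemma biprodD: assumes "is_biprod T A B P i1 i2 p1 p2"
  shows "i1 \<in> H A P" "i2 \<in> H B P" "p1 \<in> H P A" "p2 \<in> H P B"
    "cm p1 i1 = idt A" "cm p2 i2 = idt B" "cm p1 i2 = zr B A" "cm p2 i1 = zr A B"
    "ad (cm i1 p1) (cm i2 p2) = idt P"
  using assms unfolding is_biprod_def H_def by auto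

lemma biprod_swap: assumes "is_biprod T A B P i1 i2 p1 p2" shows "is_biprod T B A P i2 i1 p2 p1"
proof -
  note d = biprodD[OF assms]
  have "ad (cm i2 p2) (cm i1 p1) = idt P" using d(9) add_comm[OF comp_H[OF d(3) d(1)] comp_H[OF d(4) d(2)]]
    by simp
  thus ?thesis using assms unfolding is_biprod_def by auto
qed

lemma ft_intro: "X \<in> K \<Longrightarrow> a \<in> H A X \<Longrightarrow> b \<in> H X B \<Longrightarrow> factors_through T K A B (cm b a)"
  unfolding factors_through_def H_def by blast

lemma ftE: assumes "factors_through T K A B f" "K \<subseteq> Ob T" "A \<in> Ob T" "B \<in> Ob T"
  obtains X a b where "X \<in> K" "a \<in> H A X" "b \<in> H X B" "f = cm b a"
  using assms unfolding factors_through_def H_def by blast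

lemma ft_comp_l: assumes "factors_through T K A B f" "g \<in> H B C" "K \<subseteq> Ob T" "A \<in> Ob T"
  shows "factors_through T K A C (cm g f)"
proof -
  obtain X a b where x: "X \<in> K" "a \<in> H A X" "b \<in> H X B" "f = cm b a"
    using ftE assms HD by metis
  have "cm g f = cm (cm g b) a" using x assoc[OF x(2) x(3) assms(2)] by simp
  thus ?thesis using ft_intro[OF x(1) x(2) comp_H[OF x(3) assms(2)]] by simp
qed

lemma ft_comp_r: assumes "factors_through T K B C f" "g \<in> H A B" "K \<subseteq> Ob T" "C \<in> Ob T"
  shows "factors_through T K A C (cm f g)"
proof -
  obtain X a b where x: "X \<in> K" "a \<in> H B X" "b \<in> H X C" "f = cm b a"
    using ftE assms HD by metis
  have "cm f g = cm b (cm a g)" using x assoc[OF assms(2) x(2) x(3)] by simp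
  thus ?thesis using ft_intro[OF x(1) comp_H[OF assms(2) x(2)] x(3)] by simp
qed

lemma ft_neg: assumes "factors_through T K A B f" "K \<subseteq> Ob T" "A \<in> Ob T" "B \<in> Ob T"
  shows "factors_through T K A B (ng f)"
proof -
  obtain X a b where x: "X \<in> K" "a \<in> H A X" "b \<in> H X B" "f = cm b a"
    using ftE assms by metis
  have "ng f = cm (ng b) a" using x comp_neg_l[OF x(2) x(3)] by simp
  thus ?thesis using ft_intro[OF x(1) x(2) neg_H[OF x(3)]] by simp
qed

definition bp_closed :: "'o set \<Rightarrow> bool" where
  "bp_closed K \<longleftrightarrow> (\<forall>A\<in>K. \<forall>B\<in>K. \<forall>P i1 i2 p1 p2. is_biprod T A B P i1 i2 p1 p2 \<longrightarrow> P \<in> K)"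

lemma ft_add: assumes f: "factors_through T K A B f" and g: "factors_through T K A B g"
  and K: "K \<subseteq> Ob T" "bp_closed K" and Ob: "A \<in> Ob T" "B \<in> Ob T"
  shows "factors_through T K A B (ad f g)"
proof -
  obtain X1 a1 b1 where 1: "X1 \<in> K" "a1 \<in> H A X1" "b1 \<in> H X1 B" "f = cm b1 a1"
    using ftE f K Ob by metis
  obtain X2 a2 b2 where 2: "X2 \<in> K" "a2 \<in> H A X2" "b2 \<in> H X2 B" "g = cm b2 a2"
    using ftE g K Ob by metis
  have X: "X1 \<in> Ob T" "X2 \<in> Ob T" using 1 2 K by auto
  obtain P i1 i2 p1 p2 where P: "is_biprod T X1 X2 P i1 i2 p1 p2" using biprod_ex X by blast
  note bd = biprodD[OF P]
  have PK: "P \<in> K" using K(2) P 1 2 unfolding bp_closed_def by blast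
  define a where "a = ad (cm i1 a1) (cm i2 a2)"
  define b where "b = ad (cm b1 p1) (cm b2 p2)"
  have i1a: "cm i1 a1 \<in> H A P" and i2a: "cm i2 a2 \<in> H A P" using comp_H bd 1 2 by blast+
  have b1p: "cm b1 p1 \<in> H P B" and b2p: "cm b2 p2 \<in> H P B" using comp_H bd 1 2 by blast+
  have aH: "a \<in> H A P" using a_def add_H i1a i2a by blast
  have bH: "b \<in> H P B" using b_def add_H b1p b2p by blast
  have s1: "cm b a = ad (cm b (cm i1 a1)) (cm b (cm i2 a2))" using a_def bil_r[OF i1a i2a bH] by simp
  have s2: "cm b (cm i1 a1) = cm (cm b i1) a1" using assoc[OF 1(2) bd(1) bH] .
  have s3: "cm b i1 = ad (cm (cm b1 p1) i1) (cm (cm b2 p2) i1)" using b_def bil_l[OF bd(1) b1p b2p] by simp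
  have s4: "cm (cm b1 p1) i1 = b1" using assoc[OF bd(1) bd(3) 1(3)] bd(5) id_r[OF 1(3)] by simp
  have s5: "cm (cm b2 p2) i1 = zr X1 B" using assoc[OF bd(1) bd(4) 2(3)] bd(8) comp_zero_r[OF 2(3) X(1)] by simp
  have s6: "cm b (cm i2 a2) = cm (cm b i2) a2" using assoc[OF 2(2) bd(2) bH] .
  have s7: "cm b i2 = ad (cm (cm b1 p1) i2) (cm (cm b2 p2) i2)" using b_def bil_l[OF bd(2) b1p b2p] by simp
  have s8: "cm (cm b1 p1) i2 = zr X2 B" using assoc[OF bd(2) bd(3) 1(3)] bd(7) comp_zero_r[OF 1(3) X(2)] by simp
  have s9: "cm (cm b2 p2) i2 = b2" using assoc[OF bd(2) bd(4) 2(3)] bd(6) id_r[OF 2(3)] by simp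
  have "cm b a = ad (cm b1 a1) (cm b2 a2)"
    using s1 s2 s3 s4 s5 s6 s7 s8 s9 add_zero[OF 1(3)] zero_l[OF 2(3)] by simp
  thus ?thesis using ft_intro[OF PK aH bH] 1 2 by simp
qed

lemma ft_sub: assumes "factors_through T K A B f" "factors_through T K A B g"
  "K \<subseteq> Ob T" "bp_closed K" "A \<in> Ob T" "B \<in> Ob T"
  shows "factors_through T K A B (ad f (ng g))"
  using ft_add[OF assms(1) ft_neg[OF assms(2,3,5,6)] assms(3-6)] .


lemma tr4: assumes "(A,B,C',f,u,u') \<in> Tr" "(B,C,A',g,v,v') \<in> Tr" "(A,C,B',cm g f,w,w') \<in> Tr"
  shows "\<exists>a b. (C',B',A',a,b,cm (sM u) v') \<in> Tr"
  using t4[rule_format, of A B C' f u u' C A' g v v' B' w w'] assms by blast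

end



locale LT = TC T for T :: "('o,'m) tcat" +
  fixes N U V X :: "'o set"
  assumes N: "triangulated_subcat T N"
    and U: "additive_subcat T U" and V: "additive_subcat T V"
    and tpU: "torsion_pair T U (rperp T U)"
    and tpV: "torsion_pair T (lperp T V) V"
    and Xd: "X = U \<inter> V \<inter> N"
    and Xsum: "closed_summands T X"
    and h1: "shift_down T (rperp T U) \<subseteq> V \<inter> N"
    and h2: "shift_up T (lperp T V) \<subseteq> U \<inter> N"
begin

abbreviation "RU \<equiv> rperp T U"
abbreviation "LV \<equiv> lperp T V"

lemma asub: assumes "additive_subcat T S"
  shows "S \<subseteq> Ob T" "\<And>A B f. A \<in> S \<Longrightarrow> is_iso T A B f \<Longrightarrow> B \<in> S" "bp_closed S"
  using assms unfolding additive_subcat_def iso_closed_def bp_closed_def by blast+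

lemma NN: "additive_subcat T N" using N unfolding triangulated_subcat_def by blast
lemma N_sh: "A \<in> Ob T \<Longrightarrow> A \<in> N \<longleftrightarrow> sO A \<in> N" using N unfolding triangulated_subcat_def by blast
lemma N_3: "(A,B,C,f,g,h) \<in> Tr \<Longrightarrow> A \<in> N \<Longrightarrow> B \<in> N \<Longrightarrow> C \<in> N"
  using N unfolding triangulated_subcat_def by blast
lemma N_1: assumes "(A,B,C,f,g,h) \<in> Tr" "B \<in> N" "C \<in> N" shows "A \<in> N"
proof -
  have A: "A \<in> Ob T" using trT assms(1) by auto
  have "sO A \<in> N" using N_3[OF rot[OF assms(1)] assms(2,3)] .
  thus ?thesis using N_sh[OF A] by blast
qed
lemma N_2: assumes "(A,B,C,f,g,h) \<in> Tr" "A \<in> N" "C \<in> N" shows "B \<in> N"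
proof -
  have A: "A \<in> Ob T" "B \<in> Ob T" using trT assms(1) by auto
  have "sO A \<in> N" using N_sh[OF A(1)] assms by blast
  hence "sO B \<in> N" using N_3[OF rot[OF rot[OF assms(1)]] assms(3)] by blast
  thus ?thesis using N_sh[OF A(2)] by blast
qed

lemmas U_Ob = asub(1)[OF U] and V_Ob = asub(1)[OF V] and N_Ob = asub(1)[OF NN]
lemmas U_iso = asub(2)[OF U] and V_iso = asub(2)[OF V] and N_iso = asub(2)[OF NN]
lemmas U_bp = asub(3)[OF U] and V_bp = asub(3)[OF V] and N_bp = asub(3)[OF NN]

lemma bpD: "bp_closed S \<Longrightarrow> A \<in> S \<Longrightarrow> B \<in> S \<Longrightarrow> is_biprod T A B P i1 i2 p1 p2 \<Longrightarrow> P \<in> S"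
  unfolding bp_closed_def by blast

lemma X_Ob: "X \<subseteq> Ob T" using Xd U_Ob by blast
lemma X_bp: "bp_closed X"
  unfolding bp_closed_def
proof (intro ballI allI impI)
  fix A B P i1 i2 p1 p2 assume a: "A \<in> X" "B \<in> X" "is_biprod T A B P i1 i2 p1 p2"
  have "P \<in> U" using bpD[OF U_bp _ _ a(3)] a Xd by blast
  moreover have "P \<in> V" using bpD[OF V_bp _ _ a(3)] a Xd by blast
  moreover have "P \<in> N" using bpD[OF N_bp _ _ a(3)] a Xd by blast
  ultimately show "P \<in> X" using Xd by blast
qed
lemma X_I: "A \<in> U \<Longrightarrow> A \<in> V \<Longrightarrow> A \<in> N \<Longrightarrow> A \<in> X" using Xd by blast
lemma X_D: "A \<in> X \<Longrightarrow> A \<in> U \<and> A \<in> V \<and> A \<in> N" using Xd by blast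
lemma Xsum_D: "is_biprod T A B P i1 i2 p1 p2 \<Longrightarrow> P \<in> X \<Longrightarrow> A \<in> X"
  using Xsum unfolding closed_summands_def by blast

lemma RU_zero: "Y \<in> U \<Longrightarrow> R \<in> RU \<Longrightarrow> f \<in> H Y R \<Longrightarrow> f = zr Y R"
  unfolding rperp_def H_def by auto
lemma LV_zero: "L \<in> LV \<Longrightarrow> Y \<in> V \<Longrightarrow> f \<in> H L Y \<Longrightarrow> f = zr L Y"
  unfolding lperp_def H_def by auto
lemma RU_Ob: "R \<in> RU \<Longrightarrow> R \<in> Ob T" unfolding rperp_def by auto
lemma LV_Ob: "L \<in> LV \<Longrightarrow> L \<in> Ob T" unfolding lperp_def by auto

lemma U_tri: assumes "A \<in> Ob T" obtains P Q c d e where "P \<in> U" "Q \<in> RU" "(P, A, Q, c, d, e) \<in> Tr"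
  using tpU assms unfolding torsion_pair_def by blast
lemma V_tri: assumes "A \<in> Ob T" obtains P Q c d e where "P \<in> LV" "Q \<in> V" "(P, A, Q, c, d, e) \<in> Tr"
  using tpV assms unfolding torsion_pair_def by blast

lemma h1D: assumes "Y \<in> Ob T" "is_iso T (sO Y) R f" "R \<in> RU" shows "Y \<in> V" "Y \<in> N"
proof -
  have "R \<in> Ob T" using assms RU_Ob by blast
  hence "Y \<in> shift_down T RU" unfolding shift_down_def using assms by blast
  thus "Y \<in> V" "Y \<in> N" using h1 by blast+
qed
lemma h2D: assumes "L \<in> LV" shows "sO L \<in> U" "sO L \<in> N"
proof -
  have L: "L \<in> Ob T" using LV_Ob assms by blast
  hence "sO L \<in> shift_up T LV" unfolding shift_up_def using assms id_iso sO_Ob by blast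
  thus "sO L \<in> U" "sO L \<in> N" using h2 by blast+
qed

lemma RU_N: assumes "R \<in> RU" shows "R \<in> N"
proof -
  have R: "R \<in> Ob T" using RU_Ob assms by blast
  obtain Y e where Y: "Y \<in> Ob T" "is_iso T (sO Y) R e" using ess_surj R by blast
  have "Y \<in> N" using h1D Y assms by blast
  hence "sO Y \<in> N" using N_sh Y by blast
  thus ?thesis using N_iso Y by blast
qed
lemma LV_N: assumes "L \<in> LV" shows "L \<in> N"
  using h2D assms N_sh LV_Ob by blast

lemma precover: assumes t: "(P, A, Q, c, d, e) \<in> Tr" and Q: "Q \<in> RU" and Y: "Y \<in> U"
  and phi: "\<phi> \<in> H Y A" shows "\<exists>h\<in>H Y P. \<phi> = cm c h"
proof -
  have "cm d \<phi> = zr Y Q" using RU_zero[OF Y Q] comp_H phi trT t by blast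
  thus ?thesis using cov_exact[OF t phi] by blast
qed
lemma preenv: assumes t: "(L, A, R, l, j, k) \<in> Tr" and L: "L \<in> LV" and Y: "Y \<in> V"
  and phi: "\<phi> \<in> H A Y" shows "\<exists>h\<in>H R Y. \<phi> = cm h j"
proof -
  have "cm \<phi> l = zr L Y" using LV_zero[OF L Y] comp_H phi trT t by blast
  thus ?thesis using contra_exact[OF t phi] by blast
qed

lemma zero_via_shift: assumes "l \<in> H A B" "sM l = zr (sO A) (sO B)" shows "l = zr A B"
proof -
  have O: "A \<in> Ob T" "B \<in> Ob T" using HD assms by auto
  have "sM l = sM (zr A B)" using assms sM_zero[OF O] by simp
  thus ?thesis using sM_inj[OF assms(1) zer_H[OF O]] by blast
qed

lemma inv_cancel: assumes "is_iso T A B e" "A \<in> Ob T" "B \<in> Ob T" "t \<in> H C A" "cm e t = zr C B"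
  shows "t = zr C A"
proof -
  obtain e' where e': "e' \<in> H B A" "cm e' e = idt A" using iso_inv[OF assms(1-3)] by metis
  have eH: "e \<in> H A B" using iso_H assms by blast
  have C: "C \<in> Ob T" using HD assms by auto
  have "t = cm (cm e' e) t" using e' id_l[OF assms(4)] by simp
  also have "\<dots> = cm e' (cm e t)" using assoc[OF assms(4) eH e'(1)] by simp
  also have "\<dots> = zr C A" using assms(5) comp_zero_r[OF e'(1) C] by simp
  finally show ?thesis .
qed

lemma LA: assumes W: "W \<in> V" "W \<in> N" and Y: "Y \<in> U" and f: "f \<in> H Y W"
  shows "factors_through T X Y W f"
proof -
  have WO: "W \<in> Ob T" using W V_Ob by blast
  obtain X1 R1 a b c where 1: "X1 \<in> U" "R1 \<in> RU" "(X1, W, R1, a, b, c) \<in> Tr" using U_tri WO by metis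
  have X1N: "X1 \<in> N" using N_1[OF 1(3) W(2) RU_N[OF 1(2)]] .
  have X1O: "X1 \<in> Ob T" using trT 1 by auto
  obtain L Rv l j k where 2: "L \<in> LV" "Rv \<in> V" "(L, X1, Rv, l, j, k) \<in> Tr" using V_tri X1O by metis
  have lH: "l \<in> H L X1" and jH: "j \<in> H X1 Rv" and aH: "a \<in> H X1 W" and cH: "c \<in> H R1 (sO X1)"
    using trT 1 2 by auto
  have LO: "L \<in> Ob T" using LV_Ob 2 by blast
  have "cm a l = zr L W" using LV_zero[OF 2(1) W(1)] comp_H[OF lH aH] by blast
  then obtain u where u: "u \<in> H (sO L) R1" "sM l = cm c u" using cov_exact1[OF 1(3) lH] by blast
  have u0: "u = zr (sO L) R1" using RU_zero[OF h2D(1)[OF 2(1)] 1(2) u(1)] .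
  have "sM l = zr (sO L) (sO X1)" using u u0 comp_zero_r[OF cH sO_Ob[OF LO]] by simp
  hence l0: "l = zr L X1" using zero_via_shift lH by blast
  have r: "(X1, Rv, sO L, j, k, ng (sM l)) \<in> Tr" using rot[OF 2(3)] .
  have "ng (sM l) = zr (sO L) (sO X1)"
    using l0 sM_zero[OF LO X1O] neg_zero[OF sO_Ob[OF LO] sO_Ob[OF X1O]] by simp
  then obtain i2 p where bp: "is_biprod T X1 (sO L) Rv j i2 p k" using split_tri[OF r] by blast
  have RvX: "Rv \<in> X"
    using X_I bpD[OF U_bp 1(1) h2D(1)[OF 2(1)] bp] bpD[OF N_bp X1N h2D(2)[OF 2(1)] bp] 2(2) by blast
  note bd = biprodD[OF bp]
  obtain h where h: "h \<in> H Y X1" "f = cm a h" using precover[OF 1(3) 1(2) Y f] by blast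
  have "f = cm a (cm (cm p j) h)" using h bd(5) id_l[OF h(1)] by simp
  also have "cm (cm p j) h = cm p (cm j h)" using assoc[OF h(1) jH bd(3)] by simp
  also have "cm a (cm p (cm j h)) = cm (cm a p) (cm j h)" using assoc[OF comp_H[OF h(1) jH] bd(3) aH] .
  finally show ?thesis using ft_intro[OF RvX comp_H[OF h(1) jH] comp_H[OF bd(3) aH]] by simp
qed

lemma LB: assumes G: "G \<in> U" "G \<in> N" and Y: "Y \<in> V" and f: "f \<in> H G Y"
  shows "factors_through T X G Y f"
proof -
  have GO: "G \<in> Ob T" using G U_Ob by blast
  obtain L R1 l j k where 1: "L \<in> LV" "R1 \<in> V" "(L, G, R1, l, j, k) \<in> Tr" using V_tri GO by metis
  have R1N: "R1 \<in> N" using N_3[OF 1(3) LV_N[OF 1(1)] G(2)] .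
  have R1O: "R1 \<in> Ob T" using trT 1 by auto
  obtain U1 R' a b c where 2: "U1 \<in> U" "R' \<in> RU" "(U1, R1, R', a, b, c) \<in> Tr" using U_tri R1O by metis
  have jH: "j \<in> H G R1" and bH: "b \<in> H R1 R'" and aH: "a \<in> H U1 R1" and kH: "k \<in> H R1 (sO L)"
    using trT 1 2 by auto
  have R'O: "R' \<in> Ob T" using RU_Ob 2 by blast
  have "cm b j = zr G R'" using RU_zero[OF G(1) 2(2)] comp_H[OF jH bH] by blast
  then obtain u where u: "u \<in> H (sO L) R'" "b = cm u k" using contra_exact3[OF 1(3) bH] by blast
  have u0: "u = zr (sO L) R'" using RU_zero[OF h2D(1)[OF 1(1)] 2(2) u(1)] .
  have b0: "b = zr R1 R'" using u u0 comp_zero_l[OF kH R'O] by simp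
  obtain R0 e where R0: "R0 \<in> Ob T" "is_iso T (sO R0) R' e" using ess_surj R'O by blast
  have R0VN: "R0 \<in> V" "R0 \<in> N" using h1D R0 2(2) by blast+
  obtain f0 t where rb: "f0 \<in> H R0 U1" "t \<in> H R1 (sO R0)" "(R0, U1, R1, f0, a, t) \<in> Tr" "cm e t = b"
    using rotback[OF 2(3) R0] by blast
  have "t = zr R1 (sO R0)" using inv_cancel[OF R0(2) sO_Ob[OF R0(1)] R'O rb(2)] rb(4) b0 by simp
  then obtain i2 p where bp: "is_biprod T R0 R1 U1 f0 i2 p a" using split_tri[OF rb(3)] by blast
  have U1X: "U1 \<in> X"
    using X_I 2(1) bpD[OF V_bp R0VN(1) 1(2) bp] bpD[OF N_bp R0VN(2) R1N bp] by blast
  note bd = biprodD[OF bp]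
  obtain h where h: "h \<in> H R1 Y" "f = cm h j" using preenv[OF 1(3) 1(1) Y f] by blast
  have "f = cm h (cm (cm a i2) j)" using h bd(6) id_l[OF jH] by simp
  also have "cm (cm a i2) j = cm a (cm i2 j)" using assoc[OF jH bd(2) aH] by simp
  also have "cm h (cm a (cm i2 j)) = cm (cm h a) (cm i2 j)" using assoc[OF comp_H[OF jH bd(2)] aH h(1)] .
  finally show ?thesis using ft_intro[OF U1X comp_H[OF jH bd(2)] comp_H[OF aH h(1)]] by simp
qed

lemma LX1: assumes G: "G \<in> U" "G \<in> N" and P: "\<And>L g. L \<in> LV \<Longrightarrow> g \<in> H L G \<Longrightarrow> g = zr L G"
  shows "G \<in> X"
proof -
  have GO: "G \<in> Ob T" using G U_Ob by blast
  obtain L R l j k where 1: "L \<in> LV" "R \<in> V" "(L, G, R, l, j, k) \<in> Tr" using V_tri GO by metis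
  have lH: "l \<in> H L G" using trT 1 by auto
  have LO: "L \<in> Ob T" using LV_Ob 1 by blast
  have l0: "l = zr L G" using P 1 lH by blast
  have r: "(G, R, sO L, j, k, ng (sM l)) \<in> Tr" using rot[OF 1(3)] .
  have "ng (sM l) = zr (sO L) (sO G)"
    using l0 sM_zero[OF LO GO] neg_zero[OF sO_Ob[OF LO] sO_Ob[OF GO]] by simp
  then obtain i2 p where bp: "is_biprod T G (sO L) R j i2 p k" using split_tri[OF r] by blast
  have "R \<in> X" using X_I 1(2) bpD[OF U_bp G(1) h2D(1)[OF 1(1)] bp] bpD[OF N_bp G(2) h2D(2)[OF 1(1)] bp]
    by blast
  thus ?thesis using Xsum_D bp by blast
qed

lemma LX2: assumes G: "G \<in> V" "G \<in> N" and P: "\<And>R g. R \<in> RU \<Longrightarrow> g \<in> H G R \<Longrightarrow> g = zr G R"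
  shows "G \<in> X"
proof -
  have GO: "G \<in> Ob T" using G V_Ob by blast
  obtain U1 R' a b c where 2: "U1 \<in> U" "R' \<in> RU" "(U1, G, R', a, b, c) \<in> Tr" using U_tri GO by metis
  have bH: "b \<in> H G R'" using trT 2 by auto
  have R'O: "R' \<in> Ob T" using RU_Ob 2 by blast
  have b0: "b = zr G R'" using P 2 bH by blast
  obtain R0 e where R0: "R0 \<in> Ob T" "is_iso T (sO R0) R' e" using ess_surj R'O by blast
  have R0VN: "R0 \<in> V" "R0 \<in> N" using h1D R0 2(2) by blast+
  obtain f0 t where rb: "f0 \<in> H R0 U1" "t \<in> H G (sO R0)" "(R0, U1, G, f0, a, t) \<in> Tr" "cm e t = b"
    using rotback[OF 2(3) R0] by blast
  have "t = zr G (sO R0)" using inv_cancel[OF R0(2) sO_Ob[OF R0(1)] R'O rb(2)] rb(4) b0 by simp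
  then obtain i2 p where bp: "is_biprod T R0 G U1 f0 i2 p a" using split_tri[OF rb(3)] by blast
  have U1X: "U1 \<in> X"
    using X_I 2(1) bpD[OF V_bp R0VN(1) G(1) bp] bpD[OF N_bp R0VN(2) G(2) bp] by blast
  thus ?thesis using Xsum_D[OF biprod_swap[OF bp]] by blast
qed

end



context LT begin

lemma Rpart: assumes AO: "A \<in> Ob T"
  shows "\<exists>R W' j p q. (A, R, W', j, p, q) \<in> Tr \<and> is_preenvelope T V A R j \<and> W' \<in> U \<and> W' \<in> N
      \<and> (A \<in> U \<longrightarrow> R \<in> U \<and> R \<in> V)"
proof -
  obtain LA RA l j k where 1: "LA \<in> LV" "RA \<in> V" "(LA, A, RA, l, j, k) \<in> Tr" using V_tri AO by metis
  have jH: "j \<in> H A RA" and kH: "k \<in> H RA (sO LA)" and lH: "l \<in> H LA A" using trT 1 by auto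
  have RAO: "RA \<in> Ob T" and LAO: "LA \<in> Ob T" using trT 1 by auto
  have pre1: "is_preenvelope T V A RA j"
    unfolding is_preenvelope_def
  proof (intro conjI ballI)
    show "RA \<in> V" using 1 by blast
    show "j \<in> Hom T A RA" using HD jH by blast
    fix Z g assume Z: "Z \<in> V" "g \<in> Hom T A Z"
    have "g \<in> H A Z" using Z V_Ob AO H_iff by blast
    then obtain h where "h \<in> H RA Z" "g = cm h j" using preenv[OF 1(3) 1(1) Z(1)] by blast
    thus "\<exists>h\<in>Hom T RA Z. g = cmp T h j" using HD by blast
  qed
  have r1: "(A, RA, sO LA, j, k, ng (sM l)) \<in> Tr" using rot[OF 1(3)] .
  show ?thesis
  proof (cases "A \<in> U")
    case False
    thus ?thesis using r1 pre1 h2D[OF 1(1)] by blast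
  next
    case AU: True
    obtain U1 R' a b c where 2: "U1 \<in> U" "R' \<in> RU" "(U1, RA, R', a, b, c) \<in> Tr"
      using U_tri RAO by metis
    have aH: "a \<in> H U1 RA" and bH: "b \<in> H RA R'" using trT 2 by auto
    have R'O: "R' \<in> Ob T" using RU_Ob 2 by blast
    have "cm b j = zr A R'" using RU_zero[OF AU 2(2)] comp_H[OF jH bH] by blast
    then obtain u where u: "u \<in> H (sO LA) R'" "b = cm u k" using contra_exact3[OF 1(3) bH] by blast
    have u0: "u = zr (sO LA) R'" using RU_zero[OF h2D(1)[OF 1(1)] 2(2) u(1)] .
    have b0: "b = zr RA R'" using u u0 comp_zero_l[OF kH R'O] by simp
    obtain R0 e where R0: "R0 \<in> Ob T" "is_iso T (sO R0) R' e" using ess_surj R'O by blast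
    have R0VN: "R0 \<in> V" "R0 \<in> N" using h1D R0 2(2) by blast+
    obtain f0 t where rb: "f0 \<in> H R0 U1" "t \<in> H RA (sO R0)" "(R0, U1, RA, f0, a, t) \<in> Tr" "cm e t = b"
      using rotback[OF 2(3) R0] by blast
    have "t = zr RA (sO R0)" using inv_cancel[OF R0(2) sO_Ob[OF R0(1)] R'O rb(2)] rb(4) b0 by simp
    then obtain i2 p where bp: "is_biprod T R0 RA U1 f0 i2 p a" using split_tri[OF rb(3)] by blast
    note bd = biprodD[OF bp]
    have R0X: "R0 \<in> X"
    proof (rule LX2[OF R0VN])
      fix R g assume g: "R \<in> RU" "g \<in> H R0 R"
      have RO: "R \<in> Ob T" using RU_Ob g by blast
      have "g = cm g (cm p f0)" using bd(5) id_r[OF g(2)] by simp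
      also have "\<dots> = cm (cm g p) f0" using assoc[OF bd(1) bd(3) g(2)] .
      also have "cm g p = zr U1 R" using RU_zero[OF 2(1) g(1) comp_H[OF bd(3) g(2)]] .
      also have "cm (zr U1 R) f0 = zr R0 R" using comp_zero_l[OF bd(1) RO] .
      finally show "g = zr R0 R" .
    qed
    have U1V: "U1 \<in> V" using bpD[OF V_bp R0VN(1) 1(2) bp] .
    obtain j' where j': "j' \<in> H A U1" "j = cm a j'" using precover[OF 2(3) 2(2) AU jH] by blast
    have pre2: "is_preenvelope T V A U1 j'"
      unfolding is_preenvelope_def
    proof (intro conjI ballI)
      show "U1 \<in> V" using U1V .
      show "j' \<in> Hom T A U1" using HD j' by blast
      fix Z g assume Z: "Z \<in> V" "g \<in> Hom T A Z"
      have "g \<in> H A Z" using Z V_Ob AO H_iff by blast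
      then obtain h where h: "h \<in> H RA Z" "g = cm h j" using preenv[OF 1(3) 1(1) Z(1)] by blast
      have "g = cm (cm h a) j'" using h j' assoc[OF j'(1) aH h(1)] by simp
      thus "\<exists>h\<in>Hom T U1 Z. g = cmp T h j'" using HD comp_H[OF aH h(1)] by blast
    qed
    obtain C u1 u1' where 3: "(A, U1, C, j', u1, u1') \<in> Tr" using tr_ex[OF j'(1)] by blast
    have r1': "(A, RA, sO LA, cm a j', k, ng (sM l)) \<in> Tr" using r1 j' by simp
    obtain x y where 4: "(C, sO LA, R', x, y, cm (sM u1) c) \<in> Tr" using tr4[OF 3 2(3) r1'] by blast
    have yH: "y \<in> H (sO LA) R'" using trT 4 by auto
    have y0: "y = zr (sO LA) R'" using RU_zero[OF h2D(1)[OF 1(1)] 2(2) yH] .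
    obtain f1 t1 where rb1: "f1 \<in> H R0 C" "t1 \<in> H (sO LA) (sO R0)" "(R0, C, sO LA, f1, x, t1) \<in> Tr"
        "cm e t1 = y"
      using rotback[OF 4 R0] by blast
    have "t1 = zr (sO LA) (sO R0)" using inv_cancel[OF R0(2) sO_Ob[OF R0(1)] R'O rb1(2)] rb1(4) y0 by simp
    then obtain i2' p' where bp1: "is_biprod T R0 (sO LA) C f1 i2' p' x" using split_tri[OF rb1(3)] by blast
    have CU: "C \<in> U" using bpD[OF U_bp _ h2D(1)[OF 1(1)] bp1] R0X X_D by blast
    have CN: "C \<in> N" using bpD[OF N_bp _ h2D(2)[OF 1(1)] bp1] R0X X_D by blast
    show ?thesis using 3 pre2 CU CN 2(1) U1V by blast
  qed
qed


lemma Qpart: assumes AO: "A \<in> Ob T"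
  shows "\<exists>Q W r s t. (W, Q, A, s, r, t) \<in> Tr \<and> is_precover T U Q A r \<and> W \<in> V \<and> W \<in> N
      \<and> (A \<in> V \<longrightarrow> Q \<in> U \<and> Q \<in> V)"
proof -
  obtain UA VA r g h where 1: "UA \<in> U" "VA \<in> RU" "(UA, A, VA, r, g, h) \<in> Tr" using U_tri AO by metis
  have rH: "r \<in> H UA A" and hH: "h \<in> H VA (sO UA)" using trT 1 by auto
  have UAO: "UA \<in> Ob T" and VAO: "VA \<in> Ob T" using trT 1 by auto
  have pre1: "is_precover T U UA A r"
    unfolding is_precover_def
  proof (intro conjI ballI)
    show "UA \<in> U" using 1 by blast
    show "r \<in> Hom T UA A" using HD rH by blast
    fix Z f assume Z: "Z \<in> U" "f \<in> Hom T Z A"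
    have "f \<in> H Z A" using Z U_Ob AO H_iff by blast
    then obtain h' where "h' \<in> H Z UA" "f = cm r h'" using precover[OF 1(3) 1(2) Z(1)] by blast
    thus "\<exists>h\<in>Hom T Z UA. f = cmp T r h" using HD by blast
  qed
  obtain W0 e0 where W0: "W0 \<in> Ob T" "is_iso T (sO W0) VA e0" using ess_surj VAO by blast
  have W0VN: "W0 \<in> V" "W0 \<in> N" using h1D W0 1(2) by blast+
  show ?thesis
  proof (cases "A \<in> V")
    case False
    obtain s t where "(W0, UA, A, s, r, t) \<in> Tr" using rotback[OF 1(3) W0] by blast
    thus ?thesis using pre1 W0VN False by blast
  next
    case AV: True
    obtain L Rv l j k where 2: "L \<in> LV" "Rv \<in> V" "(L, UA, Rv, l, j, k) \<in> Tr" using V_tri UAO by metis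
    have lH: "l \<in> H L UA" and jH: "j \<in> H UA Rv" and kH: "k \<in> H Rv (sO L)" using trT 2 by auto
    have LO: "L \<in> Ob T" and RvO: "Rv \<in> Ob T" using trT 2 by auto
    have "cm r l = zr L A" using LV_zero[OF 2(1) AV] comp_H[OF lH rH] by blast
    then obtain u where u: "u \<in> H (sO L) VA" "sM l = cm h u" using cov_exact1[OF 1(3) lH] by blast
    have u0: "u = zr (sO L) VA" using RU_zero[OF h2D(1)[OF 2(1)] 1(2) u(1)] .
    have "sM l = zr (sO L) (sO UA)" using u u0 comp_zero_r[OF hH sO_Ob[OF LO]] by simp
    hence l0: "l = zr L UA" using zero_via_shift lH by blast
    have r2: "(UA, Rv, sO L, j, k, ng (sM l)) \<in> Tr" using rot[OF 2(3)] .
    have "ng (sM l) = zr (sO L) (sO UA)"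
      using l0 sM_zero[OF LO UAO] neg_zero[OF sO_Ob[OF LO] sO_Ob[OF UAO]] by simp
    then obtain i2 p where bp: "is_biprod T UA (sO L) Rv j i2 p k" using split_tri[OF r2] by blast
    note bd = biprodD[OF bp]
    have RvU: "Rv \<in> U" using bpD[OF U_bp 1(1) h2D(1)[OF 2(1)] bp] .
    have SLX: "sO L \<in> X"
    proof (rule LX1[OF h2D[OF 2(1)]])
      fix L' \<phi> assume a: "L' \<in> LV" "\<phi> \<in> H L' (sO L)"
      have L'O: "L' \<in> Ob T" using LV_Ob a by blast
      have z: "cm i2 \<phi> = zr L' Rv" using LV_zero[OF a(1) 2(2) comp_H[OF a(2) bd(2)]] .
      have "\<phi> = cm (cm k i2) \<phi>" using bd(6) id_l[OF a(2)] by simp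
      also have "\<dots> = cm k (cm i2 \<phi>)" using assoc[OF a(2) bd(2) kH] by simp
      also have "\<dots> = zr L' (sO L)" using z comp_zero_r[OF kH L'O] by simp
      finally show "\<phi> = zr L' (sO L)" .
    qed
    obtain q where q: "q \<in> H Rv A" "r = cm q j" using preenv[OF 2(3) 2(1) AV rH] by blast
    have pre2: "is_precover T U Rv A q"
      unfolding is_precover_def
    proof (intro conjI ballI)
      show "Rv \<in> U" using RvU .
      show "q \<in> Hom T Rv A" using HD q by blast
      fix Z f assume Z: "Z \<in> U" "f \<in> Hom T Z A"
      have "f \<in> H Z A" using Z U_Ob AO H_iff by blast
      then obtain h' where h': "h' \<in> H Z UA" "f = cm r h'" using precover[OF 1(3) 1(2) Z(1)] by blast
      have "f = cm q (cm j h')" using h' q assoc[OF h'(1) jH q(1)] by simp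
      thus "\<exists>h\<in>Hom T Z Rv. f = cmp T q h" using HD comp_H[OF h'(1) jH] by blast
    qed
    obtain Cq v v' where 3: "(Rv, A, Cq, q, v, v') \<in> Tr" using tr_ex[OF q(1)] by blast
    have CqO: "Cq \<in> Ob T" using trT 3 by auto
    have u1t: "(UA, A, VA, cm q j, g, h) \<in> Tr" using 1(3) q by simp
    obtain x y where 4: "(sO L, VA, Cq, x, y, cm (sM k) v') \<in> Tr" using tr4[OF r2 3 u1t] by blast
    have xH: "x \<in> H (sO L) VA" and yH: "y \<in> H VA Cq" and zH: "cm (sM k) v' \<in> H Cq (sO (sO L))"
      using trT 4 by auto
    have x0: "x = zr (sO L) VA" using RU_zero[OF h2D(1)[OF 2(1)] 1(2) xH] .
    obtain W e where W: "W \<in> Ob T" "is_iso T (sO W) Cq e" using ess_surj CqO by blast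
    define z where "z = cm (sM k) v'"
    have SO: "sO L \<in> Ob T" "sO W0 \<in> Ob T" "sO W \<in> Ob T" "sO (sO L) \<in> Ob T" using sO_Ob LO W0 W by auto
    obtain e0' where e0': "e0' \<in> H VA (sO W0)" "cm e0 e0' = idt VA" "is_iso T VA (sO W0) e0'"
      using iso_inv[OF W0(2) SO(2) VAO] by metis
    obtain e' where e': "e' \<in> H Cq (sO W)" "cm e e' = idt Cq" "is_iso T Cq (sO W) e'"
      using iso_inv[OF W(2) SO(3) CqO] by metis
    have e0H: "e0 \<in> H (sO W0) VA" using iso_H W0 SO VAO by blast
    have eH: "e \<in> H (sO W) Cq" using iso_H W SO CqO by blast
    define g1 where "g1 = cm e' (cm y e0)"
    define h1 where "h1 = cm z e"
    have g1H: "g1 \<in> H (sO W0) (sO W)" using g1_def comp_H e0H yH e' by blast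
    have h1H: "h1 \<in> H (sO W) (sO (sO L))" using h1_def comp_H eH zH z_def by blast
    have 5: "(sO L, sO W0, sO W, zr (sO L) (sO W0), g1, h1) \<in> Tr"
    proof (rule iso_cl[OF 4 zer_H[OF SO(1,2)] g1H h1H[unfolded z_def h1_def, folded z_def h1_def]
          id_iso[OF SO(1)] e0'(3) e'(3)])
      show "cm e0' x = cm (zr (sO L) (sO W0)) (idt (sO L))"
        using x0 comp_zero_r[OF e0'(1) SO(1)] comp_zero_l[OF id_H[OF SO(1)] SO(2)] by simp
      have "cm g1 e0' = cm e' (cm y (cm e0 e0'))"
        using g1_def assoc[OF e0'(1) e0H yH] assoc[OF e0'(1) comp_H[OF e0H yH] e'(1)] by simp
      thus "cm e' y = cm g1 e0'" using e0'(2) id_r[OF yH] by simp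
      have "cm h1 e' = cm z (cm e e')" using h1_def assoc[OF e'(1) eH zH[folded z_def]] by simp
      thus "cm (sM (idt (sO L))) (cm (sM k) v') = cm h1 e'"
        using e'(2) id_r[OF zH] sM_id[OF SO(1)] id_l[OF zH] z_def by simp
    qed
    obtain g0 where g0: "g0 \<in> H W0 W" "sM g0 = ng g1" using sM_surj[OF neg_H[OF g1H] W0(1) W(1)] by blast
    obtain h0 where h0: "h0 \<in> H W (sO L)" "sM h0 = ng h1" using sM_surj[OF neg_H[OF h1H] W(1) SO(1)] by blast
    have zL: "zr L W0 \<in> H L W0" using zer_H LO W0 by blast
    have nz: "ng (sM (zr L W0)) = zr (sO L) (sO W0)"
      using sM_zero[OF LO W0(1)] neg_zero[OF SO(1) SO(2)] by simp
    have "ng (sM g0) = g1" using g0 neg_neg[OF g1H] by simp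
    moreover have "ng (sM h0) = h1" using h0 neg_neg[OF h1H] by simp
    ultimately have 6: "(L, W0, W, zr L W0, g0, h0) \<in> Tr" using rot3[OF zL g0(1) h0(1)] 5 nz by simp
    have 7: "(W0, W, sO L, g0, h0, zr (sO L) (sO W0)) \<in> Tr" using rot[OF 6] nz by simp
    obtain i3 p3 where bp3: "is_biprod T W0 (sO L) W g0 i3 p3 h0" using split_tri[OF 7] by blast
    have WV: "W \<in> V" using bpD[OF V_bp W0VN(1) _ bp3] SLX X_D by blast
    have WN: "W \<in> N" using bpD[OF N_bp W0VN(2) _ bp3] SLX X_D by blast
    obtain s t where "(W, Rv, A, s, q, t) \<in> Tr" using rotback[OF 3 W] by blast
    thus ?thesis using pre2 WV WN RvU 2(2) by blast
  qed
qed

end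



context LT begin

lemma add_sub_cancel': assumes "x \<in> H A B" "y \<in> H A B" shows "ad x (ad y (ng x)) = y"
proof -
  have "ad x (ad y (ng x)) = ad (ad x (ng x)) y" using add_swap23[OF assms(1,2) neg_H[OF assms(1)]] .
  also have "\<dots> = y" using add_neg[OF assms(1)] zero_l[OF assms(2)] by simp
  finally show ?thesis .
qed

lemma id_ft_in_X: assumes A: "A \<in> Ob T" and ft: "factors_through T X A A (idt A)" shows "A \<in> X"
proof -
  obtain P a b where P: "P \<in> X" "a \<in> H A P" "b \<in> H P A" "idt A = cm b a" using ftE[OF ft X_Ob A A] by blast
  obtain C i2 p1 p2 where "is_biprod T A C P a i2 p1 p2" using retract_biprod[OF P(2) P(3)] P(4) by metis
  thus ?thesis using Xsum_D P by blast
qed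

lemma NC1: "rperpQ T X U (Ob T) \<subseteq> N"
proof
  fix W assume "W \<in> rperpQ T X U (Ob T)"
  hence W: "W \<in> Ob T" and ftW: "\<And>Y f. Y \<in> U \<Longrightarrow> f \<in> Hom T Y W \<Longrightarrow> factors_through T X Y W f"
    unfolding rperpQ_def by blast+
  obtain UW VW r g h where 1: "UW \<in> U" "VW \<in> RU" "(UW, W, VW, r, g, h) \<in> Tr" using U_tri W by metis
  have rH: "r \<in> H UW W" and hH: "h \<in> H VW (sO UW)" using trT 1 by auto
  have UWO: "UW \<in> Ob T" and VWO: "VW \<in> Ob T" using trT 1 by auto
  have "factors_through T X UW W r" using ftW 1(1) HD(3)[OF rH] by blast
  then obtain X0 a b where x0: "X0 \<in> X" "a \<in> H UW X0" "b \<in> H X0 W" "r = cm b a"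
    using ftE X_Ob UWO W by metis
  obtain c where c: "c \<in> H X0 UW" "b = cm r c" using precover[OF 1(3) 1(2) _ x0(3)] x0(1) X_D by blast
  have ca: "cm c a \<in> H UW UW" using comp_H[OF x0(2) c(1)] .
  have idU: "idt UW \<in> H UW UW" using id_H UWO by blast
  define d where "d = ad (idt UW) (ng (cm c a))"
  have dH: "d \<in> H UW UW" using d_def add_H idU neg_H ca by blast
  have "cm r d = ad (cm r (idt UW)) (ng (cm r (cm c a)))" using d_def comp_sub_r[OF idU ca rH] by simp
  also have "cm r (cm c a) = r"
  proof -
    have "cm r (cm c a) = cm (cm r c) a" using assoc[OF x0(2) c(1) rH] .
    also have "\<dots> = cm b a" using c(2) by simp
    finally show ?thesis using x0(4) by simp
  qed
  finally have "cm r d = zr UW W" using id_r[OF rH] add_neg[OF rH] by simp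
  then obtain v where v: "v \<in> H (sO UW) VW" "sM d = cm h v" using cov_exact1[OF 1(3) dH] by blast
  obtain W0 e0 where W0: "W0 \<in> Ob T" "is_iso T (sO W0) VW e0" using ess_surj VWO by blast
  have W0VN: "W0 \<in> V" "W0 \<in> N" using h1D W0 1(2) by blast+
  have SO: "sO W0 \<in> Ob T" "sO UW \<in> Ob T" using sO_Ob W0 UWO by auto
  obtain e0' where e0': "e0' \<in> H VW (sO W0)" "cm e0 e0' = idt VW"
    using iso_inv[OF W0(2) SO(1) VWO] by metis
  have e0H: "e0 \<in> H (sO W0) VW" using iso_H W0 SO VWO by blast
  obtain n where n: "n \<in> H UW W0" "sM n = cm e0' v" using sM_surj[OF comp_H[OF v(1) e0'(1)] UWO W0(1)] by blast
  have "factors_through T X UW W0 n" using LA[OF W0VN 1(1) n(1)] .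
  then obtain X1 n1 n2 where x1: "X1 \<in> X" "n1 \<in> H UW X1" "n2 \<in> H X1 W0" "n = cm n2 n1"
    using ftE X_Ob UWO W0 by metis
  have X1O: "X1 \<in> Ob T" using x1 X_Ob by blast
  have he: "cm (cm h e0) (sM n2) \<in> H (sO X1) (sO UW)" using comp_H sM_H[OF x1(3)] e0H hH by blast
  obtain m where m: "m \<in> H X1 UW" "sM m = cm (cm h e0) (sM n2)" using sM_surj[OF he X1O UWO] by blast
  have "sM d = cm h (cm (cm e0 e0') v)" using v e0'(2) id_l[OF v(1)] by simp
  also have "\<dots> = cm (cm h e0) (sM n)"
    using n(2) assoc[OF v(1) e0'(1) e0H] assoc[OF comp_H[OF v(1) e0'(1)] e0H hH] by simp
  also have "sM n = cm (sM n2) (sM n1)" using x1(4) sM_comp[OF x1(2) x1(3)] by simp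
  also have "cm (cm h e0) (cm (sM n2) (sM n1)) = cm (sM m) (sM n1)"
    using m(2) assoc[OF sM_H[OF x1(2)] sM_H[OF x1(3)] comp_H[OF e0H hH]] by simp
  also have "\<dots> = sM (cm m n1)" using sM_comp[OF x1(2) m(1)] by simp
  finally have "d = cm m n1" using sM_inj[OF dH comp_H[OF x1(2) m(1)]] by blast
  hence ftd: "factors_through T X UW UW d" using ft_intro[OF x1(1) x1(2) m(1)] by simp
  have ftca: "factors_through T X UW UW (cm c a)" using ft_intro[OF x0(1) x0(2) c(1)] .
  have "ad (cm c a) d = idt UW" using d_def add_sub_cancel'[OF ca idU] by simp
  hence "factors_through T X UW UW (idt UW)" using ft_add[OF ftca ftd X_Ob X_bp UWO UWO] by simp
  hence "UW \<in> X" using id_ft_in_X UWO by blast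
  hence "UW \<in> N" using X_D by blast
  thus "W \<in> N" using N_2[OF 1(3) _ RU_N[OF 1(2)]] by blast
qed

lemma NC2: "lperpQ T X V (Ob T) \<subseteq> N"
proof
  fix W assume "W \<in> lperpQ T X V (Ob T)"
  hence W: "W \<in> Ob T" and ftW: "\<And>Y f. Y \<in> V \<Longrightarrow> f \<in> Hom T W Y \<Longrightarrow> factors_through T X W Y f"
    unfolding lperpQ_def by blast+
  obtain LW RW l j k where 1: "LW \<in> LV" "RW \<in> V" "(LW, W, RW, l, j, k) \<in> Tr" using V_tri W by metis
  have jH: "j \<in> H W RW" and kH: "k \<in> H RW (sO LW)" using trT 1 by auto
  have RWO: "RW \<in> Ob T" and LWO: "LW \<in> Ob T" using trT 1 by auto
  have "factors_through T X W RW j" using ftW 1(2) HD(3)[OF jH] by blast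
  then obtain X0 a b where x0: "X0 \<in> X" "a \<in> H W X0" "b \<in> H X0 RW" "j = cm b a"
    using ftE X_Ob RWO W by metis
  obtain c where c: "c \<in> H RW X0" "a = cm c j" using preenv[OF 1(3) 1(1) _ x0(2)] x0(1) X_D by blast
  have bc: "cm b c \<in> H RW RW" using comp_H[OF c(1) x0(3)] .
  have idR: "idt RW \<in> H RW RW" using id_H RWO by blast
  define d where "d = ad (idt RW) (ng (cm b c))"
  have dH: "d \<in> H RW RW" using d_def add_H idR neg_H bc by blast
  have "cm d j = ad (cm (idt RW) j) (ng (cm (cm b c) j))" using d_def comp_sub_l[OF jH idR bc] by simp
  also have "cm (cm b c) j = j"
  proof -
    have "cm (cm b c) j = cm b (cm c j)" using assoc[OF jH c(1) x0(3)] by simp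
    also have "\<dots> = cm b a" using c(2) by simp
    finally show ?thesis using x0(4) by simp
  qed
  finally have "cm d j = zr W RW" using id_l[OF jH] add_neg[OF jH] by simp
  then obtain \<mu> where mu: "\<mu> \<in> H (sO LW) RW" "d = cm \<mu> k" using contra_exact3[OF 1(3) dH] by blast
  have "factors_through T X (sO LW) RW \<mu>" using LB[OF h2D[OF 1(1)] 1(2) mu(1)] .
  hence ftd: "factors_through T X RW RW d" using ft_comp_r[OF _ kH X_Ob RWO] mu(2) by simp
  have ftbc: "factors_through T X RW RW (cm b c)" using ft_intro[OF x0(1) c(1) x0(3)] .
  have "ad (cm b c) d = idt RW" using d_def add_sub_cancel'[OF bc idR] by simp
  hence "factors_through T X RW RW (idt RW)" using ft_add[OF ftbc ftd X_Ob X_bp RWO RWO] by simp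
  hence "RW \<in> X" using id_ft_in_X RWO by blast
  hence "RW \<in> N" using X_D by blast
  thus "W \<in> N" using N_2[OF 1(3) LV_N[OF 1(1)]] by blast
qed

definition QP where "QP A Q W r s t \<longleftrightarrow> (W, Q, A, s, r, t) \<in> Tr \<and> is_precover T U Q A r \<and> W \<in> V \<and> W \<in> N
      \<and> (A \<in> V \<longrightarrow> Q \<in> U \<and> Q \<in> V)"
definition RP where "RP A R W' j p q \<longleftrightarrow> (A, R, W', j, p, q) \<in> Tr \<and> is_preenvelope T V A R j \<and> W' \<in> U \<and> W' \<in> N
      \<and> (A \<in> U \<longrightarrow> R \<in> U \<and> R \<in> V)"

lemma loc: "localization_triple T (Ob T) U X V"
proof -
  have "\<forall>A\<in>Ob T. \<exists>z. QP A (fst z) (fst (snd z)) (fst (snd (snd z))) (fst (snd (snd (snd z))))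
     (snd (snd (snd (snd z))))"
  proof
    fix A assume "A \<in> Ob T"
    then obtain Q W r s t where "QP A Q W r s t" using Qpart unfolding QP_def by blast
    thus "\<exists>z. QP A (fst z) (fst (snd z)) (fst (snd (snd z))) (fst (snd (snd (snd z))))
     (snd (snd (snd (snd z))))" by (intro exI[of _ "(Q,W,r,s,t)"]) simp
  qed
  then obtain F where F: "\<forall>A\<in>Ob T. QP A (fst (F A)) (fst (snd (F A))) (fst (snd (snd (F A))))
     (fst (snd (snd (snd (F A))))) (snd (snd (snd (snd (F A)))))" by (metis bchoice)
  have "\<forall>A\<in>Ob T. \<exists>z. RP A (fst z) (fst (snd z)) (fst (snd (snd z))) (fst (snd (snd (snd z))))
     (snd (snd (snd (snd z))))"
  proof
    fix A assume "A \<in> Ob T"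
    then obtain R W' j p q where "RP A R W' j p q" using Rpart unfolding RP_def by blast
    thus "\<exists>z. RP A (fst z) (fst (snd z)) (fst (snd (snd z))) (fst (snd (snd (snd z))))
     (snd (snd (snd (snd z))))" by (intro exI[of _ "(R,W',j,p,q)"]) simp
  qed
  then obtain G where G: "\<forall>A\<in>Ob T. RP A (fst (G A)) (fst (snd (G A))) (fst (snd (snd (G A))))
     (fst (snd (snd (snd (G A))))) (snd (snd (snd (snd (G A)))))" by (metis bchoice)
  define Q where "Q = (\<lambda>A. fst (F A))"
  define W where "W = (\<lambda>A. fst (snd (F A)))"
  define r where "r = (\<lambda>A. fst (snd (snd (F A))))"
  define s where "s = (\<lambda>A. fst (snd (snd (snd (F A)))))"
  define t where "t = (\<lambda>A. snd (snd (snd (snd (F A)))))"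
  define R where "R = (\<lambda>A. fst (G A))"
  define W' where "W' = (\<lambda>A. fst (snd (G A)))"
  define j where "j = (\<lambda>A. fst (snd (snd (G A))))"
  define p where "p = (\<lambda>A. fst (snd (snd (snd (G A)))))"
  define q where "q = (\<lambda>A. snd (snd (snd (snd (G A)))))"
  have QPA: "\<And>A. A \<in> Ob T \<Longrightarrow> QP A (Q A) (W A) (r A) (s A) (t A)"
    using F Q_def W_def r_def s_def t_def by simp
  have RPA: "\<And>A. A \<in> Ob T \<Longrightarrow> RP A (R A) (W' A) (j A) (p A) (q A)"
    using G R_def W'_def j_def p_def q_def by simp
  have main: "\<forall>A\<in>Ob T.
          (W A, Q A, A, s A, r A, t A) \<in> tri T \<and>
          is_precover T U (Q A) A (r A) \<and> W A \<in> rperpQ T X U (Ob T) \<and>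
          (A, R A, W' A, j A, p A, q A) \<in> tri T \<and>
          is_preenvelope T V A (R A) (j A) \<and> W' A \<in> lperpQ T X V (Ob T) \<and>
          (A \<in> V \<longrightarrow> Q A \<in> U \<inter> V \<and> W A \<in> rperpQ T X (U \<inter> V) V) \<and>
          (A \<in> U \<longrightarrow> R A \<in> U \<inter> V \<and> W' A \<in> lperpQ T X (U \<inter> V) U)"
  proof
    fix A assume A: "A \<in> Ob T"
    note qp = QPA[OF A, unfolded QP_def] and rp = RPA[OF A, unfolded RP_def]
    have WO: "W A \<in> Ob T" using trT(4)[of "W A"] qp by blast
    have W'O: "W' A \<in> Ob T" using trT(6)[of A "R A" "W' A"] rp by blast
    have ftW: "\<And>Y f. Y \<in> U \<Longrightarrow> f \<in> Hom T Y (W A) \<Longrightarrow> factors_through T X Y (W A) f"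
      using LA qp U_Ob WO H_iff by blast
    have ftW': "\<And>Y f. Y \<in> V \<Longrightarrow> f \<in> Hom T (W' A) Y \<Longrightarrow> factors_through T X (W' A) Y f"
      using LB rp V_Ob W'O H_iff by blast
    show "(W A, Q A, A, s A, r A, t A) \<in> tri T \<and>
          is_precover T U (Q A) A (r A) \<and> W A \<in> rperpQ T X U (Ob T) \<and>
          (A, R A, W' A, j A, p A, q A) \<in> tri T \<and>
          is_preenvelope T V A (R A) (j A) \<and> W' A \<in> lperpQ T X V (Ob T) \<and>
          (A \<in> V \<longrightarrow> Q A \<in> U \<inter> V \<and> W A \<in> rperpQ T X (U \<inter> V) V) \<and>
          (A \<in> U \<longrightarrow> R A \<in> U \<inter> V \<and> W' A \<in> lperpQ T X (U \<inter> V) U)"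
      unfolding rperpQ_def lperpQ_def using qp rp WO W'O ftW ftW' by blast
  qed
  show ?thesis unfolding localization_triple_def using Xd U_Ob V_Ob main by blast
qed

lemma Nloc: "N_localization_triple T N U X V"
  unfolding N_localization_triple_def using loc Xd NC1 NC2 by blast

end



context LT begin

lemma alg1: assumes "i \<in> H A B" "x \<in> H A B" shows "ad (ad i (ng x)) (ng i) = ng x"
proof -
  have "ad (ad i (ng x)) (ng i) = ad i (ad (ng x) (ng i))" using add_assoc assms neg_H by blast
  also have "ad (ng x) (ng i) = ad (ng i) (ng x)" using add_comm assms neg_H by blast
  also have "ad i (ad (ng i) (ng x)) = ad (ad i (ng i)) (ng x)" using add_assoc assms neg_H by metis
  also have "\<dots> = ng x" using add_neg[OF assms(1)] zero_l[OF neg_H[OF assms(2)]] by simp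
  finally show ?thesis .
qed

lemma sub_sub: assumes "x \<in> H A B" "y \<in> H A B" shows "ad x (ng (ad x (ng y))) = y"
proof -
  have n: "ad x (ng y) \<in> H A B" using add_H neg_H assms by blast
  have "ad (ad x (ng y)) (ng (ad x (ng y))) = zr A B" using add_neg[OF n] .
  hence "ad x (ad (ng y) (ng (ad x (ng y)))) = zr A B" using add_assoc assms neg_H n by metis
  hence "ad (ng y) (ng (ad x (ng y))) = ng x" using neg_unique[OF assms(1)] add_H neg_H assms n by metis
  hence "ad y (ad (ng y) (ng (ad x (ng y)))) = ad y (ng x)" by simp
  hence "ad (ad y (ng y)) (ng (ad x (ng y))) = ad y (ng x)" using add_assoc assms neg_H n by metis
  hence "ng (ad x (ng y)) = ad y (ng x)" using add_neg[OF assms(2)] zero_l[OF neg_H[OF n]] by simp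
  thus ?thesis using add_sub_cancel'[OF assms] by simp
qed

lemma inv_cancel_r: assumes "is_iso T A B e" "A \<in> Ob T" "B \<in> Ob T" "t \<in> H B C" "cm t e = zr A C"
  shows "t = zr B C"
proof -
  obtain e' where e': "e' \<in> H B A" "cm e e' = idt B" using iso_inv[OF assms(1-3)] by metis
  have eH: "e \<in> H A B" using iso_H assms by blast
  have C: "C \<in> Ob T" using HD assms by auto
  have "t = cm t (cm e e')" using e' id_r[OF assms(4)] by simp
  also have "\<dots> = cm (cm t e) e'" using assoc[OF e'(1) eH assms(4)] .
  also have "\<dots> = zr B C" using assms(5) comp_zero_l[OF e'(1) C] by simp
  finally show ?thesis .
qed

lemma mono_mod:
  assumes tA: "(A,B,M,s,g,h) \<in> Tr" and AU: "A \<in> U"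
    and tM: "(UM, M, RM, r, b, c) \<in> Tr" and RM: "RM \<in> RU" and hr: "cm h r = zr UM (sO A)"
    and t: "t \<in> H UM B" "r = cm g t"
    and psi: "\<psi> \<in> H A A" and x: "X3 \<in> X" "\<alpha> \<in> H A X3" "\<beta> \<in> H X3 B" "cm s \<psi> = cm \<beta> \<alpha>"
  shows "factors_through T X A A \<psi>"
proof -
  have sH: "s \<in> H A B" and gH: "g \<in> H B M" and hH: "h \<in> H M (sO A)" using trT tA by auto
  have rH: "r \<in> H UM M" and bH: "b \<in> H M RM" and cH: "c \<in> H RM (sO UM)" using trT tM by auto
  have AO: "A \<in> Ob T" "B \<in> Ob T" "M \<in> Ob T" "UM \<in> Ob T" "RM \<in> Ob T" using trT tA tM by auto
  have X3U: "X3 \<in> U" using X_D x by blast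
  obtain \<gamma> where ga: "\<gamma> \<in> H X3 UM" "cm g \<beta> = cm r \<gamma>"
    using precover[OF tM RM X3U comp_H[OF x(3) gH]] by blast
  have tg: "cm t \<gamma> \<in> H X3 B" using comp_H[OF ga(1) t(1)] .
  define \<beta>' where "\<beta>' = ad \<beta> (ng (cm t \<gamma>))"
  have b'H: "\<beta>' \<in> H X3 B" using \<beta>'_def add_H neg_H x(3) tg by blast
  have "cm g \<beta>' = ad (cm g \<beta>) (ng (cm g (cm t \<gamma>)))" using \<beta>'_def comp_sub_r[OF x(3) tg gH] by simp
  also have "cm g (cm t \<gamma>) = cm r \<gamma>" using assoc[OF ga(1) t(1) gH] t(2) by simp
  finally have "cm g \<beta>' = zr X3 M" using ga(2) add_neg[OF comp_H[OF ga(1) rH]] by simp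
  then obtain \<delta> where de: "\<delta> \<in> H X3 A" "\<beta>' = cm s \<delta>" using cov_exact[OF tA b'H] by blast
  have da: "cm \<delta> \<alpha> \<in> H A A" using comp_H[OF x(2) de(1)] .
  define \<psi>1 where "\<psi>1 = ad \<psi> (ng (cm \<delta> \<alpha>))"
  have p1H: "\<psi>1 \<in> H A A" using \<psi>1_def add_H neg_H psi da by blast
  define \<mu> where "\<mu> = cm \<gamma> \<alpha>"
  have muH: "\<mu> \<in> H A UM" using \<mu>_def comp_H[OF x(2) ga(1)] by simp
  have ba: "cm \<beta> \<alpha> \<in> H A B" and tga: "cm (cm t \<gamma>) \<alpha> \<in> H A B" using comp_H x tg by blast+
  have "cm s \<psi>1 = ad (cm s \<psi>) (ng (cm s (cm \<delta> \<alpha>)))" using \<psi>1_def comp_sub_r[OF psi da sH] by simp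
  also have "cm s (cm \<delta> \<alpha>) = cm \<beta>' \<alpha>" using assoc[OF x(2) de(1) sH] de(2) by simp
  also have "cm \<beta>' \<alpha> = ad (cm \<beta> \<alpha>) (ng (cm (cm t \<gamma>) \<alpha>))" using \<beta>'_def comp_sub_l[OF x(2) x(3) tg] by simp
  finally have "cm s \<psi>1 = cm (cm t \<gamma>) \<alpha>" using x(4) sub_sub[OF ba tga] by simp
  hence sp1: "cm s \<psi>1 = cm t \<mu>" using assoc[OF x(2) ga(1) t(1)] \<mu>_def by simp
  have "cm r \<mu> = cm (cm r \<gamma>) \<alpha>" using \<mu>_def assoc[OF x(2) ga(1) rH] by simp
  also have "\<dots> = cm g (cm \<beta> \<alpha>)" using ga(2) assoc[OF x(2) x(3) gH] by simp
  also have "\<dots> = cm (cm g s) \<psi>" using x(4) assoc[OF psi sH gH] by simp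
  also have "\<dots> = zr A M" using tri_comp0[OF tA] comp_zero_l[OF psi AO(3)] by simp
  finally have rmu: "cm r \<mu> = zr A M" .
  obtain RM0 e1 where R0: "RM0 \<in> Ob T" "is_iso T (sO RM0) RM e1" using ess_surj AO(5) by blast
  have R0VN: "RM0 \<in> V" "RM0 \<in> N" using h1D R0 RM by blast+
  obtain \<rho> \<tau> where rb: "\<rho> \<in> H RM0 UM" "\<tau> \<in> H M (sO RM0)" "(RM0, UM, M, \<rho>, r, \<tau>) \<in> Tr" "cm e1 \<tau> = b"
    using rotback[OF tM R0] by blast
  obtain \<nu> where nu: "\<nu> \<in> H A RM0" "\<mu> = cm \<rho> \<nu>" using cov_exact[OF rb(3) muH rmu] by blast
  have "cm g (cm t \<rho>) = cm r \<rho>" using assoc[OF rb(1) t(1) gH] t(2) by simp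
  also have "\<dots> = zr RM0 M" using tri_comp0[OF rb(3)] .
  finally obtain \<kappa> where ka: "\<kappa> \<in> H RM0 A" "cm t \<rho> = cm s \<kappa>"
    using cov_exact[OF tA comp_H[OF rb(1) t(1)]] by blast
  have kn: "cm \<kappa> \<nu> \<in> H A A" using comp_H[OF nu(1) ka(1)] .
  have "cm s \<psi>1 = cm (cm t \<rho>) \<nu>" using sp1 nu(2) assoc[OF nu(1) rb(1) t(1)] by simp
  also have "\<dots> = cm s (cm \<kappa> \<nu>)" using ka(2) assoc[OF nu(1) ka(1) sH] by simp
  finally have sp1': "cm s \<psi>1 = cm s (cm \<kappa> \<nu>)" .
  have ftnu: "factors_through T X A RM0 \<nu>" using LA[OF R0VN AU nu(1)] .
  have ftkn: "factors_through T X A A (cm \<kappa> \<nu>)" using ft_comp_l[OF ftnu ka(1) X_Ob AO(1)] .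
  define \<psi>2 where "\<psi>2 = ad \<psi>1 (ng (cm \<kappa> \<nu>))"
  have p2H: "\<psi>2 \<in> H A A" using \<psi>2_def add_H neg_H p1H kn by blast
  have "cm s \<psi>2 = ad (cm s \<psi>1) (ng (cm s (cm \<kappa> \<nu>)))" using \<psi>2_def comp_sub_r[OF p1H kn sH] by simp
  hence "cm s \<psi>2 = zr A B" using sp1' add_neg[OF comp_H[OF kn sH]] by simp
  then obtain w where w: "w \<in> H (sO A) M" "sM \<psi>2 = cm h w" using cov_exact1[OF tA p2H] by blast
  obtain \<eta> where eta: "\<eta> \<in> H RM (sO A)" "h = cm \<eta> b" using contra_exact[OF tM hH hr] by blast
  have SO: "sO RM0 \<in> Ob T" "sO A \<in> Ob T" using sO_Ob R0 AO by auto
  obtain e1' where e1': "e1' \<in> H RM (sO RM0)" "cm e1 e1' = idt RM"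
    using iso_inv[OF R0(2) SO(1) AO(5)] by metis
  have e1H: "e1 \<in> H (sO RM0) RM" using iso_H R0 SO AO by blast
  have bw: "cm b w \<in> H (sO A) RM" using comp_H[OF w(1) bH] .
  obtain \<mu>' where mu': "\<mu>' \<in> H A RM0" "sM \<mu>' = cm e1' (cm b w)"
    using sM_surj[OF comp_H[OF bw e1'(1)] AO(1) R0(1)] by blast
  have "factors_through T X A RM0 \<mu>'" using LA[OF R0VN AU mu'(1)] .
  then obtain X4 a2 b2 where x4: "X4 \<in> X" "a2 \<in> H A X4" "b2 \<in> H X4 RM0" "\<mu>' = cm b2 a2"
    using ftE X_Ob AO(1) R0(1) by metis
  have X4O: "X4 \<in> Ob T" using X_Ob x4 by blast
  have eb: "cm (cm \<eta> e1) (sM b2) \<in> H (sO X4) (sO A)" using comp_H sM_H[OF x4(3)] e1H eta(1) by blast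
  obtain \<zeta> where ze: "\<zeta> \<in> H X4 A" "sM \<zeta> = cm (cm \<eta> e1) (sM b2)" using sM_surj[OF eb X4O AO(1)] by blast
  have "sM \<psi>2 = cm (cm \<eta> b) w" using w eta by simp
  also have "\<dots> = cm \<eta> (cm (cm e1 e1') (cm b w))" using assoc[OF w(1) bH eta(1)] e1'(2) id_l[OF bw] by simp
  also have "\<dots> = cm (cm \<eta> e1) (sM \<mu>')"
    using mu'(2) assoc[OF bw e1'(1) e1H] assoc[OF comp_H[OF bw e1'(1)] e1H eta(1)] by simp
  also have "sM \<mu>' = cm (sM b2) (sM a2)" using x4(4) sM_comp[OF x4(2) x4(3)] by simp
  also have "cm (cm \<eta> e1) (cm (sM b2) (sM a2)) = cm (sM \<zeta>) (sM a2)"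
    using ze(2) assoc[OF sM_H[OF x4(2)] sM_H[OF x4(3)] comp_H[OF e1H eta(1)]] by simp
  also have "\<dots> = sM (cm \<zeta> a2)" using sM_comp[OF x4(2) ze(1)] by simp
  finally have "\<psi>2 = cm \<zeta> a2" using sM_inj[OF p2H comp_H[OF x4(2) ze(1)]] by blast
  hence ftp2: "factors_through T X A A \<psi>2" using ft_intro[OF x4(1) x4(2) ze(1)] by simp
  have p1eq: "\<psi>1 = ad \<psi>2 (cm \<kappa> \<nu>)" using \<psi>2_def sub_add_cancel[OF p1H kn] by simp
  have peq: "\<psi> = ad \<psi>1 (cm \<delta> \<alpha>)" using \<psi>1_def sub_add_cancel[OF psi da] by simp
  have ftp1: "factors_through T X A A \<psi>1" using p1eq ft_add[OF ftp2 ftkn X_Ob X_bp AO(1) AO(1)] by simp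
  have ftda: "factors_through T X A A (cm \<delta> \<alpha>)" using ft_intro[OF x(1) x(2) de(1)] .
  show ?thesis using peq ft_add[OF ftp1 ftda X_Ob X_bp AO(1) AO(1)] by simp
qed

lemma verdier2: assumes hyp: "U \<inter> N \<subseteq> shift_up T LV" shows "verdier_condition T N U X V"
  unfolding verdier_condition_def
proof (intro allI impI, elim conjE)
  fix A B M s g h assume tA: "(A,B,M,s,g,h) \<in> Tr" and A: "A \<in> U \<inter> V" and B: "B \<in> U \<inter> V" and MN: "M \<in> N"
  have sH: "s \<in> H A B" and gH: "g \<in> H B M" and hH: "h \<in> H M (sO A)" using trT tA by auto
  have AO: "A \<in> Ob T" "B \<in> Ob T" "M \<in> Ob T" using trT tA by auto
  obtain UM RM r b c where 1: "UM \<in> U" "RM \<in> RU" "(UM, M, RM, r, b, c) \<in> Tr" using U_tri AO(3) by metis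
  have rH: "r \<in> H UM M" using trT 1 by auto
  have UMO: "UM \<in> Ob T" using trT 1 by auto
  have UMN: "UM \<in> N" using N_1[OF 1(3) MN RU_N[OF 1(2)]] .
  have "UM \<in> shift_up T LV" using hyp 1(1) UMN by blast
  then obtain L0 e0 where L0: "L0 \<in> LV" "is_iso T (sO L0) UM e0" unfolding shift_up_def by blast
  have L0O: "L0 \<in> Ob T" using LV_Ob L0 by blast
  have SO: "sO L0 \<in> Ob T" "sO A \<in> Ob T" using sO_Ob L0O AO by auto
  have e0H: "e0 \<in> H (sO L0) UM" using iso_H L0 SO UMO by blast
  have hr: "cm h r \<in> H UM (sO A)" using comp_H[OF rH hH] .
  obtain w0 where w0: "w0 \<in> H L0 A" "sM w0 = cm (cm h r) e0" using sM_surj[OF comp_H[OF e0H hr] L0O AO(1)] by blast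
  have "w0 = zr L0 A" using LV_zero[OF L0(1) _ w0(1)] A by blast
  hence "cm (cm h r) e0 = zr (sO L0) (sO A)" using w0(2) sM_zero[OF L0O AO(1)] by simp
  hence hr0: "cm h r = zr UM (sO A)" using inv_cancel_r[OF L0(2) SO(1) UMO hr] by blast
  obtain t where t: "t \<in> H UM B" "r = cm g t" using cov_exact3[OF tA rH hr0] by blast
  obtain g' where g': "g' \<in> H B UM" "g = cm r g'" using precover[OF 1(3) 1(2) _ gH] B by blast
  have tg': "cm t g' \<in> H B B" using comp_H[OF g'(1) t(1)] .
  have idB: "idt B \<in> H B B" using id_H AO by blast
  define d where "d = ad (idt B) (ng (cm t g'))"
  have dH: "d \<in> H B B" using d_def add_H neg_H idB tg' by blast
  have "cm g d = ad (cm g (idt B)) (ng (cm g (cm t g')))" using d_def comp_sub_r[OF idB tg' gH] by simp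
  also have "cm g (cm t g') = g"
  proof -
    have "cm g (cm t g') = cm (cm g t) g'" using assoc[OF g'(1) t(1) gH] .
    also have "\<dots> = cm r g'" using t(2) by simp
    finally show ?thesis using g'(2) by simp
  qed
  finally have "cm g d = zr B M" using id_r[OF gH] add_neg[OF gH] by simp
  then obtain u where u: "u \<in> H B A" "d = cm s u" using cov_exact[OF tA dH] by blast
  have ftt: "factors_through T X UM B t" using LB[OF 1(1) UMN _ t(1)] B by blast
  have fttg: "factors_through T X B B (cm t g')" using ft_comp_r[OF ftt g'(1) X_Ob AO(2)] .
  have right: "factors_through T X B B (ad (cm s u) (ng (idt B)))"
    using u(2) d_def alg1[OF idB tg'] ft_neg[OF fttg X_Ob AO(2) AO(2)] by simp
  obtain X3 t1 t2 where x3: "X3 \<in> X" "t1 \<in> H UM X3" "t2 \<in> H X3 B" "t = cm t2 t1"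
    using ftE[OF ftt X_Ob UMO AO(2)] by blast
  have idA: "idt A \<in> H A A" using id_H AO by blast
  have us: "cm u s \<in> H A A" using comp_H[OF sH u(1)] .
  define \<psi> where "\<psi> = ad (cm u s) (ng (idt A))"
  have psiH: "\<psi> \<in> H A A" using \<psi>_def add_H neg_H us idA by blast
  define y where "y = cm (cm t g') s"
  have yH: "y \<in> H A B" using y_def comp_H[OF sH tg'] by simp
  have "cm s \<psi> = ad (cm s (cm u s)) (ng (cm s (idt A)))" using \<psi>_def comp_sub_r[OF us idA sH] by simp
  also have "cm s (cm u s) = cm d s" using assoc[OF sH u(1) sH] u(2) by simp
  also have "cm d s = ad (cm (idt B) s) (ng y)" using d_def y_def comp_sub_l[OF sH idB tg'] by simp
  also have "cm (idt B) s = s" using id_l[OF sH] .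
  also have "cm s (idt A) = s" using id_r[OF sH] .
  finally have "cm s \<psi> = ng y" using alg1[OF sH yH] by simp
  also have "y = cm t2 (cm t1 (cm g' s))"
  proof -
    have "y = cm t (cm g' s)" using y_def assoc[OF sH g'(1) t(1)] by simp
    also have "\<dots> = cm t2 (cm t1 (cm g' s))" using x3(4) assoc[OF comp_H[OF sH g'(1)] x3(2) x3(3)] by simp
    finally show ?thesis .
  qed
  also have "ng (cm t2 (cm t1 (cm g' s))) = cm (ng t2) (cm t1 (cm g' s))"
    using comp_neg_l[OF comp_H[OF comp_H[OF sH g'(1)] x3(2)] x3(3)] by simp
  finally have spsi: "cm s \<psi> = cm (ng t2) (cm t1 (cm g' s))" .
  have left: "factors_through T X A A \<psi>"
    using mono_mod[OF tA _ 1(3) 1(2) hr0 t psiH x3(1) comp_H[OF comp_H[OF sH g'(1)] x3(2)] neg_H[OF x3(3)] spsi] A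
    by blast
  show "factor_iso T X A B s"
    unfolding factor_iso_def using HD(3)[OF sH] HD(3)[OF u(1)] left right \<psi>_def by blast
qed

end



context LT begin

lemma epi_mod:
  assumes tF: "(M', A, B, h', s, g'') \<in> Tr" and BV: "B \<in> V"
    and tV: "(LM, M', VM, l, j, k) \<in> Tr" and LM: "LM \<in> LV" and sj: "cm (sM j) g'' = zr B (sO VM)"
    and t: "t \<in> H A VM" "j = cm t h'"
    and phi: "\<phi> \<in> H B B" and x: "X3 \<in> X" "\<alpha> \<in> H A X3" "\<beta> \<in> H X3 B" "cm \<phi> s = cm \<beta> \<alpha>"
  shows "factors_through T X B B \<phi>"
proof -
  have sH: "s \<in> H A B" and hH: "h' \<in> H M' A" and gH: "g'' \<in> H B (sO M')" using trT tF by auto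
  have jH: "j \<in> H M' VM" and kH: "k \<in> H VM (sO LM)" and lH: "l \<in> H LM M'" using trT tV by auto
  have AO: "A \<in> Ob T" "B \<in> Ob T" "M' \<in> Ob T" "VM \<in> Ob T" "LM \<in> Ob T" using trT tF tV by auto
  have X3V: "X3 \<in> V" using X_D x by blast
  obtain \<gamma> where ga: "\<gamma> \<in> H VM X3" "cm \<alpha> h' = cm \<gamma> j"
    using preenv[OF tV LM X3V comp_H[OF hH x(2)]] by blast
  have gt: "cm \<gamma> t \<in> H A X3" using comp_H[OF t(1) ga(1)] .
  define \<alpha>' where "\<alpha>' = ad \<alpha> (ng (cm \<gamma> t))"
  have a'H: "\<alpha>' \<in> H A X3" using \<alpha>'_def add_H neg_H x(2) gt by blast
  have "cm \<alpha>' h' = ad (cm \<alpha> h') (ng (cm (cm \<gamma> t) h'))" using \<alpha>'_def comp_sub_l[OF hH x(2) gt] by simp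
  also have "cm (cm \<gamma> t) h' = cm \<gamma> j" using assoc[OF hH t(1) ga(1)] t(2) by simp
  finally have "cm \<alpha>' h' = zr M' X3" using ga(2) add_neg[OF comp_H[OF jH ga(1)]] by simp
  then obtain \<delta> where de: "\<delta> \<in> H B X3" "\<alpha>' = cm \<delta> s" using contra_exact[OF tF a'H] by blast
  have bd: "cm \<beta> \<delta> \<in> H B B" using comp_H[OF de(1) x(3)] .
  define \<phi>1 where "\<phi>1 = ad \<phi> (ng (cm \<beta> \<delta>))"
  have p1H: "\<phi>1 \<in> H B B" using \<phi>1_def add_H neg_H phi bd by blast
  define \<mu> where "\<mu> = cm \<beta> \<gamma>"
  have muH: "\<mu> \<in> H VM B" using \<mu>_def comp_H[OF ga(1) x(3)] by simp
  have ba: "cm \<beta> \<alpha> \<in> H A B" and bgt: "cm \<beta> (cm \<gamma> t) \<in> H A B" using comp_H x gt by blast+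
  have "cm \<phi>1 s = ad (cm \<phi> s) (ng (cm (cm \<beta> \<delta>) s))" using \<phi>1_def comp_sub_l[OF sH phi bd] by simp
  also have "cm (cm \<beta> \<delta>) s = cm \<beta> \<alpha>'" using assoc[OF sH de(1) x(3)] de(2) by simp
  also have "cm \<beta> \<alpha>' = ad (cm \<beta> \<alpha>) (ng (cm \<beta> (cm \<gamma> t)))" using \<alpha>'_def comp_sub_r[OF x(2) gt x(3)] by simp
  finally have "cm \<phi>1 s = cm \<beta> (cm \<gamma> t)" using x(4) sub_sub[OF ba bgt] by simp
  hence sp1: "cm \<phi>1 s = cm \<mu> t" using assoc[OF t(1) ga(1) x(3)] \<mu>_def by simp
  have "cm \<mu> j = cm \<beta> (cm \<gamma> j)" using \<mu>_def assoc[OF jH ga(1) x(3)] by simp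
  also have "\<dots> = cm (cm \<beta> \<alpha>) h'" using ga(2) assoc[OF hH x(2) x(3)] by simp
  also have "\<dots> = cm \<phi> (cm s h')" using x(4) assoc[OF hH sH phi] by simp
  also have "\<dots> = zr M' B" using tri_comp0[OF tF] comp_zero_r[OF phi AO(3)] by simp
  finally have muj: "cm \<mu> j = zr M' B" .
  obtain \<nu> where nu: "\<nu> \<in> H (sO LM) B" "\<mu> = cm \<nu> k" using contra_exact3[OF tV muH muj] by blast
  have kt: "cm k t \<in> H A (sO LM)" using comp_H[OF t(1) kH] .
  have "cm (cm k t) h' = cm k j" using assoc[OF hH t(1) kH] t(2) by simp
  also have "\<dots> = zr M' (sO LM)" using tri_comp1[OF tV] .
  finally obtain \<kappa> where ka: "\<kappa> \<in> H B (sO LM)" "cm k t = cm \<kappa> s"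
    using contra_exact[OF tF kt] by blast
  have nk: "cm \<nu> \<kappa> \<in> H B B" using comp_H[OF ka(1) nu(1)] .
  have "cm \<phi>1 s = cm \<nu> (cm k t)" using sp1 nu(2) assoc[OF t(1) kH nu(1)] by simp
  also have "\<dots> = cm (cm \<nu> \<kappa>) s" using ka(2) assoc[OF sH ka(1) nu(1)] by simp
  finally have sp1': "cm \<phi>1 s = cm (cm \<nu> \<kappa>) s" .
  have ftnu: "factors_through T X (sO LM) B \<nu>" using LB[OF h2D[OF LM] BV nu(1)] .
  have ftnk: "factors_through T X B B (cm \<nu> \<kappa>)" using ft_comp_r[OF ftnu ka(1) X_Ob AO(2)] .
  define \<phi>2 where "\<phi>2 = ad \<phi>1 (ng (cm \<nu> \<kappa>))"
  have p2H: "\<phi>2 \<in> H B B" using \<phi>2_def add_H neg_H p1H nk by blast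
  have "cm \<phi>2 s = ad (cm \<phi>1 s) (ng (cm (cm \<nu> \<kappa>) s))" using \<phi>2_def comp_sub_l[OF sH p1H nk] by simp
  hence "cm \<phi>2 s = zr A B" using sp1' add_neg[OF comp_H[OF sH nk]] by simp
  then obtain w where w: "w \<in> H (sO M') B" "\<phi>2 = cm w g''" using contra_exact3[OF tF p2H] by blast
  have r2: "(VM, sO LM, sO M', k, ng (sM l), ng (sM j)) \<in> Tr" using rot[OF rot[OF tV]] .
  have "cm (ng (sM j)) g'' = ng (cm (sM j) g'')" using comp_neg_l[OF gH sM_H[OF jH]] .
  hence "cm (ng (sM j)) g'' = zr B (sO VM)" using sj neg_zero[OF AO(2) sO_Ob[OF AO(4)]] by simp
  then obtain \<eta> where eta: "\<eta> \<in> H B (sO LM)" "g'' = cm (ng (sM l)) \<eta>" using cov_exact3[OF r2 gH] by blast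
  have nl: "ng (sM l) \<in> H (sO LM) (sO M')" using neg_H sM_H lH by blast
  have wl: "cm w (ng (sM l)) \<in> H (sO LM) B" using comp_H[OF nl w(1)] .
  have ftwl: "factors_through T X (sO LM) B (cm w (ng (sM l)))" using LB[OF h2D[OF LM] BV wl] .
  have "\<phi>2 = cm (cm w (ng (sM l))) \<eta>" using w(2) eta(2) assoc[OF eta(1) nl w(1)] by simp
  hence ftp2: "factors_through T X B B \<phi>2" using ft_comp_r[OF ftwl eta(1) X_Ob AO(2)] by simp
  have p1eq: "\<phi>1 = ad \<phi>2 (cm \<nu> \<kappa>)" using \<phi>2_def sub_add_cancel[OF p1H nk] by simp
  have peq: "\<phi> = ad \<phi>1 (cm \<beta> \<delta>)" using \<phi>1_def sub_add_cancel[OF phi bd] by simp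
  have ftp1: "factors_through T X B B \<phi>1" using p1eq ft_add[OF ftp2 ftnk X_Ob X_bp AO(2) AO(2)] by simp
  have ftbd: "factors_through T X B B (cm \<beta> \<delta>)" using ft_intro[OF x(1) de(1) x(3)] .
  show ?thesis using peq ft_add[OF ftp1 ftbd X_Ob X_bp AO(2) AO(2)] by simp
qed

lemma verdier3: assumes hyp: "V \<inter> N \<subseteq> shift_down T RU" shows "verdier_condition T N U X V"
  unfolding verdier_condition_def
proof (intro allI impI, elim conjE)
  fix A B M s g h assume tA: "(A,B,M,s,g,h) \<in> Tr" and A: "A \<in> U \<inter> V" and B: "B \<in> U \<inter> V" and MN: "M \<in> N"
  have sH: "s \<in> H A B" and gH: "g \<in> H B M" and hH: "h \<in> H M (sO A)" using trT tA by auto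
  have AO: "A \<in> Ob T" "B \<in> Ob T" "M \<in> Ob T" using trT tA by auto
  obtain M' eM where M': "M' \<in> Ob T" "is_iso T (sO M') M eM" using ess_surj AO(3) by blast
  have SM: "sO M' \<in> Ob T" using sO_Ob M' by blast
  obtain eM' where "is_iso T M (sO M') eM'" using iso_inv[OF M'(2) SM AO(3)] by metis
  hence "sO M' \<in> N" using N_iso MN by blast
  hence M'N: "M' \<in> N" using N_sh M' by blast
  obtain h' g'' where rb: "h' \<in> H M' A" "g'' \<in> H B (sO M')" "(M', A, B, h', s, g'') \<in> Tr" "cm eM g'' = g"
    using rotback[OF tA M'] by blast
  note tF = rb(3)
  obtain LM VM l j k where 1: "LM \<in> LV" "VM \<in> V" "(LM, M', VM, l, j, k) \<in> Tr" using V_tri M' by metis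
  have jH: "j \<in> H M' VM" using trT 1 by auto
  have VMO: "VM \<in> Ob T" using trT 1 by auto
  have VMN: "VM \<in> N" using N_3[OF 1(3) LV_N[OF 1(1)] M'N] .
  have "VM \<in> shift_down T RU" using hyp 1(2) VMN by blast
  then obtain R0 e0 where R0: "R0 \<in> RU" "is_iso T (sO VM) R0 e0" unfolding shift_down_def by blast
  have R0O: "R0 \<in> Ob T" using RU_Ob R0 by blast
  have SV: "sO VM \<in> Ob T" using sO_Ob VMO by blast
  have e0H: "e0 \<in> H (sO VM) R0" using iso_H R0 SV R0O by blast
  have jg: "cm (sM j) g'' \<in> H B (sO VM)" using comp_H[OF rb(2) sM_H[OF jH]] .
  have "cm e0 (cm (sM j) g'') = zr B R0" using RU_zero[OF _ R0(1) comp_H[OF jg e0H]] B by blast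
  hence sj: "cm (sM j) g'' = zr B (sO VM)" using inv_cancel[OF R0(2) SV R0O jg] by blast
  have rF: "(A, B, sO M', s, g'', ng (sM h')) \<in> Tr" using rot[OF tF] .
  obtain u0 where u0: "u0 \<in> H (sO A) (sO VM)" "sM j = cm u0 (ng (sM h'))"
    using contra_exact3[OF rF sM_H[OF jH] sj] by blast
  obtain t0 where t0: "t0 \<in> H A VM" "sM t0 = u0" using sM_surj[OF u0(1) AO(1) VMO] by blast
  define t where "t = ng t0"
  have tH: "t \<in> H A VM" using t_def neg_H t0 by simp
  have "sM j = ng (cm (sM t0) (sM h'))" using u0(2) t0(2) comp_neg_r[OF sM_H[OF rb(1)] sM_H[OF t0(1)]] by simp
  also have "\<dots> = ng (sM (cm t0 h'))" using sM_comp[OF rb(1) t0(1)] by simp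
  also have "\<dots> = sM (ng (cm t0 h'))" using sM_neg[OF comp_H[OF rb(1) t0(1)]] by simp
  also have "ng (cm t0 h') = cm t h'" using t_def comp_neg_l[OF rb(1) t0(1)] by simp
  finally have jt: "j = cm t h'" using sM_inj[OF jH comp_H[OF rb(1) tH]] by blast
  obtain h0 where h0: "h0 \<in> H VM A" "h' = cm h0 j" using preenv[OF 1(3) 1(1) _ rb(1)] A by blast
  have ht: "cm h0 t \<in> H A A" using comp_H[OF tH h0(1)] .
  have idA: "idt A \<in> H A A" using id_H AO by blast
  define d where "d = ad (idt A) (ng (cm h0 t))"
  have dH: "d \<in> H A A" using d_def add_H neg_H idA ht by blast
  have "cm d h' = ad (cm (idt A) h') (ng (cm (cm h0 t) h'))" using d_def comp_sub_l[OF rb(1) idA ht] by simp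
  also have "cm (cm h0 t) h' = h'"
  proof -
    have "cm (cm h0 t) h' = cm h0 (cm t h')" using assoc[OF rb(1) tH h0(1)] by simp
    also have "\<dots> = cm h0 j" using jt by simp
    finally show ?thesis using h0(2) by simp
  qed
  finally have "cm d h' = zr M' A" using id_l[OF rb(1)] add_neg[OF rb(1)] by simp
  then obtain u where u: "u \<in> H B A" "d = cm u s" using contra_exact[OF tF dH] by blast
  have ftt: "factors_through T X A VM t" using LA[OF 1(2) VMN _ tH] A by blast
  have ftht: "factors_through T X A A (cm h0 t)" using ft_comp_l[OF ftt h0(1) X_Ob AO(1)] .
  have left: "factors_through T X A A (ad (cm u s) (ng (idt A)))"
    using u(2) d_def alg1[OF idA ht] ft_neg[OF ftht X_Ob AO(1) AO(1)] by simp
  obtain X3 t1 t2 where x3: "X3 \<in> X" "t1 \<in> H A X3" "t2 \<in> H X3 VM" "t = cm t2 t1"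
    using ftE[OF ftt X_Ob AO(1) VMO] by blast
  have idB: "idt B \<in> H B B" using id_H AO by blast
  have su: "cm s u \<in> H B B" using comp_H[OF u(1) sH] .
  define \<phi> where "\<phi> = ad (cm s u) (ng (idt B))"
  have phiH: "\<phi> \<in> H B B" using \<phi>_def add_H neg_H su idB by blast
  define y where "y = cm s (cm h0 t)"
  have yH: "y \<in> H A B" using y_def comp_H[OF ht sH] by simp
  have "cm \<phi> s = ad (cm (cm s u) s) (ng (cm (idt B) s))" using \<phi>_def comp_sub_l[OF sH su idB] by simp
  also have "cm (cm s u) s = cm s d" using assoc[OF sH u(1) sH] u(2) by simp
  also have "cm s d = ad (cm s (idt A)) (ng y)" using d_def y_def comp_sub_r[OF idA ht sH] by simp
  also have "cm s (idt A) = s" using id_r[OF sH] .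
  also have "cm (idt B) s = s" using id_l[OF sH] .
  finally have "cm \<phi> s = ng y" using alg1[OF sH yH] by simp
  also have "y = cm (cm s (cm h0 t2)) t1"
  proof -
    have "y = cm s (cm h0 (cm t2 t1))" using y_def x3(4) by simp
    also have "cm h0 (cm t2 t1) = cm (cm h0 t2) t1" using assoc[OF x3(2) x3(3) h0(1)] .
    also have "cm s (cm (cm h0 t2) t1) = cm (cm s (cm h0 t2)) t1"
      using assoc[OF x3(2) comp_H[OF x3(3) h0(1)] sH] .
    finally show ?thesis .
  qed
  also have "ng (cm (cm s (cm h0 t2)) t1) = cm (ng (cm s (cm h0 t2))) t1"
    using comp_neg_l[OF x3(2) comp_H[OF comp_H[OF x3(3) h0(1)] sH]] by simp
  finally have sphi: "cm \<phi> s = cm (ng (cm s (cm h0 t2))) t1" .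
  have right: "factors_through T X B B \<phi>"
    using epi_mod[OF tF _ 1(3) 1(1) sj tH jt phiH x3(1) x3(2) neg_H[OF comp_H[OF comp_H[OF x3(3) h0(1)] sH]] sphi] B
    by blast
  show "factor_iso T X A B s"
    unfolding factor_iso_def using HD(3)[OF sH] HD(3)[OF u(1)] left right \<phi>_def by blast
qed

end

theorem lemma4p3:
  fixes T :: "('o, 'm) tcat" and N U V X :: "'o set"
  assumes tri: "triangulated T"
    and N: "triangulated_subcat T N"
    and U: "additive_subcat T U" and V: "additive_subcat T V"
    and tpU: "torsion_pair T U (rperp T U)"
    and tpV: "torsion_pair T (lperp T V) V"
    and X: "X = U \<inter> V \<inter> N"
    and Xsum: "closed_summands T X"
    and h1: "shift_down T (rperp T U) \<subseteq> V \<inter> N"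
    and h2: "shift_up T (lperp T V) \<subseteq> U \<inter> N"
  shows "N_localization_triple T N U X V \<and>
         (shift_up T (lperp T V) = U \<inter> N \<longrightarrow> verdier_condition T N U X V) \<and>
         (shift_down T (rperp T U) = V \<inter> N \<longrightarrow> verdier_condition T N U X V)"
proof -
  interpret L: LT T N U V X
    by (intro LT.intro TC.intro LT_axioms.intro) (fact tri N U V tpU tpV X Xsum h1 h2)+
  show ?thesis using L.Nloc L.verdier2 L.verdier3 by auto
qed

end
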